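(* Let $K$ be an algebraically closed field, $n\ge1$, $k\ge1$, and let $A=KQ/I$ be the Brauer star algebra with $n$ vertices and multiplicity $k$. Let $M$ be an indecomposable non-projective $A$-module. Then the minimal projective presentation of $M$ (regarded as a complex concentrated in degrees $0$ and $1$) is a partial tilting complex if and only if the length $l(M)$ of $M$ (number of composition factors) satisfies $l(M)<n$.
   Context: $Q$ is the cyclic quiver with vertices $1,\dots,n$ indexed by $\mathbb{Z}/n\mathbb{Z}$ and arrows $\alpha_i: i\to i+1$; $I$ is the ideal generated by $(\alpha_i\alpha_{i+1}\cdots\alpha_{i-1})^k\alpha_i$ for $i=1,\dots,n$ (paths composed left to right). Every indecomposable $A$-module is uniserial. A bounded complex $T$ of finitely generated projective $A$-modules is partial tilting if $\mathrm{Hom}_{D^b(A)}(T,T[i])=0$ for all $i\neq0$. *)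

theory Defs
  imports Main "HOL-Library.Function_Algebras" "HOL-Computational_Algebra.Polynomial"
begin

text \<open>Vertices of the cyclic quiver are 0,...,n-1 (representing Z/nZ); the arrow
  alpha_i goes from i to (i+1) mod n.  A path is determined by its starting vertex i
  and its length l; paths compose left to right.  The ideal I is generated by the paths
  (alpha_i ... alpha_(i-1))^k alpha_i, i.e. by all paths of length nk+1, so I is a
  monomial ideal and KQ/I has as K-basis the (residue classes of the) paths of length
  at most nk.  An element of A is a K-linear combination of basis paths, i.e. a
  function from (start vertex, length) to K supported on these basis paths.\<close>

type_synonym 'k alg = "nat \<times> nat \<Rightarrow> 'k"

definition bpaths :: "nat \<Rightarrow> nat \<Rightarrow> (nat \<times> nat) set" where
  "bpaths n k = {(i, l). i < n \<and> l \<le> n * k}"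

definition is_alg :: "nat \<Rightarrow> nat \<Rightarrow> ('k::field) alg \<Rightarrow> bool" where
  "is_alg n k a \<longleftrightarrow> (\<forall>p. p \<notin> bpaths n k \<longrightarrow> a p = 0)"

definition alg_add :: "('k::field) alg \<Rightarrow> 'k alg \<Rightarrow> 'k alg" where
  "alg_add a b = (\<lambda>p. a p + b p)"

text \<open>Product: (path from i of length l1) times (path from i+l1 of length l2) is the
  path from i of length l1+l2 (zero in A if this exceeds nk); other products vanish.\<close>
definition alg_mult :: "nat \<Rightarrow> nat \<Rightarrow> ('k::field) alg \<Rightarrow> 'k alg \<Rightarrow> 'k alg" where
  "alg_mult n k a b = (\<lambda>(i, l). if (i, l) \<in> bpaths n k
      then (\<Sum>l1\<in>{0..l}. a (i, l1) * b ((i + l1) mod n, l - l1)) else 0)"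

definition alg_one :: "nat \<Rightarrow> nat \<Rightarrow> ('k::field) alg" where
  "alg_one n k = (\<lambda>(i, l). if i < n \<and> l = 0 then 1 else 0)"

text \<open>A right A-module is a carrier set V inside an additive group type together
  with a right action of A.  (The K-vector space structure is the one induced by the
  action of K = K 1_A.)\<close>

type_synonym ('m, 'k) rmod = "'m set \<times> ('m \<Rightarrow> 'k alg \<Rightarrow> 'm)"

definition carr :: "('m, 'k) rmod \<Rightarrow> 'm set" where "carr M = fst M"
definition act :: "('m, 'k) rmod \<Rightarrow> 'm \<Rightarrow> 'k alg \<Rightarrow> 'm" where "act M = snd M"

definition rmodule :: "nat \<Rightarrow> nat \<Rightarrow> ('m::ab_group_add, 'k::field) rmod \<Rightarrow> bool" where
  "rmodule n k M \<longleftrightarrow>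
     0 \<in> carr M \<and> (\<forall>v\<in>carr M. \<forall>w\<in>carr M. v + w \<in> carr M) \<and> (\<forall>v\<in>carr M. - v \<in> carr M)
   \<and> (\<forall>v\<in>carr M. \<forall>a. is_alg n k a \<longrightarrow> act M v a \<in> carr M)
   \<and> (\<forall>v\<in>carr M. \<forall>w\<in>carr M. \<forall>a. is_alg n k a \<longrightarrow> act M (v + w) a = act M v a + act M w a)
   \<and> (\<forall>v\<in>carr M. \<forall>a b. is_alg n k a \<longrightarrow> is_alg n k b \<longrightarrow>
          act M v (alg_add a b) = act M v a + act M v b)
   \<and> (\<forall>v\<in>carr M. \<forall>a b. is_alg n k a \<longrightarrow> is_alg n k b \<longrightarrow>
          act M v (alg_mult n k a b) = act M (act M v a) b)
   \<and> (\<forall>v\<in>carr M. act M v (alg_one n k) = v)"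

definition submodule :: "nat \<Rightarrow> nat \<Rightarrow> 'm set \<Rightarrow> ('m::ab_group_add, 'k::field) rmod \<Rightarrow> bool" where
  "submodule n k U M \<longleftrightarrow> U \<subseteq> carr M \<and> 0 \<in> U \<and> (\<forall>u\<in>U. \<forall>w\<in>U. u + w \<in> U)
     \<and> (\<forall>u\<in>U. - u \<in> U) \<and> (\<forall>u\<in>U. \<forall>a. is_alg n k a \<longrightarrow> act M u a \<in> U)"

definition setsum :: "'m::ab_group_add set \<Rightarrow> 'm set \<Rightarrow> 'm set" where
  "setsum U W = {u + w | u w. u \<in> U \<and> w \<in> W}"

definition fingen :: "nat \<Rightarrow> nat \<Rightarrow> ('m::ab_group_add, 'k::field) rmod \<Rightarrow> bool" where
  "fingen n k M \<longleftrightarrow> (\<exists>S. finite S \<and> S \<subseteq> carr M \<and>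
      (\<forall>U. submodule n k U M \<longrightarrow> S \<subseteq> U \<longrightarrow> U = carr M))"

definition indecomposable :: "nat \<Rightarrow> nat \<Rightarrow> ('m::ab_group_add, 'k::field) rmod \<Rightarrow> bool" where
  "indecomposable n k M \<longleftrightarrow> carr M \<noteq> {0} \<and>
     (\<forall>U W. submodule n k U M \<longrightarrow> submodule n k W M \<longrightarrow> U \<inter> W = {0}
        \<longrightarrow> setsum U W = carr M \<longrightarrow> U = {0} \<or> W = {0})"

definition rhom :: "nat \<Rightarrow> nat \<Rightarrow> ('m::ab_group_add, 'k::field) rmod \<Rightarrow> ('n::ab_group_add, 'k) rmod
     \<Rightarrow> ('m \<Rightarrow> 'n) \<Rightarrow> bool" where
  "rhom n k M N f \<longleftrightarrow> (\<forall>v\<in>carr M. f v \<in> carr N)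
     \<and> (\<forall>v\<in>carr M. \<forall>w\<in>carr M. f (v + w) = f v + f w)
     \<and> (\<forall>v\<in>carr M. \<forall>a. is_alg n k a \<longrightarrow> f (act M v a) = act N (f v) a)"

text \<open>Composition length: the maximal length of a strictly increasing chain of
  submodules from 0 to M (equal to the number of composition factors).\<close>
definition has_chain :: "nat \<Rightarrow> nat \<Rightarrow> ('m::ab_group_add, 'k::field) rmod \<Rightarrow> nat \<Rightarrow> bool" where
  "has_chain n k M m \<longleftrightarrow> (\<exists>c :: nat \<Rightarrow> 'm set. c 0 = {0} \<and> c m = carr M
      \<and> (\<forall>j\<le>m. submodule n k (c j) M) \<and> (\<forall>j<m. c j \<subset> c (Suc j)))"

definition modlength :: "nat \<Rightarrow> nat \<Rightarrow> ('m::ab_group_add, 'k::field) rmod \<Rightarrow> nat" where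
  "modlength n k M = (GREATEST m. has_chain n k M m)"

text \<open>Ambient type for free modules A^m: finitely supported sequences of elements of A.\<close>
type_synonym 'k fvec = "nat \<Rightarrow> 'k alg"

definition free_mod :: "nat \<Rightarrow> nat \<Rightarrow> nat \<Rightarrow> ('k::field fvec, 'k) rmod" where
  "free_mod n k m = ({x. (\<forall>j<m. is_alg n k (x j)) \<and> (\<forall>j\<ge>m. x j = 0)},
                     (\<lambda>x a. (\<lambda>j. alg_mult n k (x j) a)))"

text \<open>A finitely generated module P is projective iff it is a direct summand of a
  free module, i.e. iff every epimorphism from a finitely generated free module onto P
  splits.\<close>
definition fg_projective :: "nat \<Rightarrow> nat \<Rightarrow> ('m::ab_group_add, 'k::field) rmod \<Rightarrow> bool" where
  "fg_projective n k P \<longleftrightarrow> rmodule n k P \<and> fingen n k P \<and>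
     (\<forall>m g. rhom n k (free_mod n k m) P g \<longrightarrow> g ` carr (free_mod n k m) = carr P \<longrightarrow>
        (\<exists>s. rhom n k P (free_mod n k m) s \<and> (\<forall>v\<in>carr P. g (s v) = v)))"

definition superfluous :: "nat \<Rightarrow> nat \<Rightarrow> 'm set \<Rightarrow> ('m::ab_group_add, 'k::field) rmod \<Rightarrow> bool" where
  "superfluous n k X P \<longleftrightarrow> (\<forall>U. submodule n k U P \<longrightarrow> setsum U X = carr P \<longrightarrow> U = carr P)"

text \<open>Minimal projective presentation  P1 --d--> P0 --e--> M --> 0 :
  exact, P0, P1 finitely generated projective, e : P0 -> M a projective cover
  (superfluous kernel) and d : P1 -> ker e a projective cover.\<close>
definition min_proj_pres :: "nat \<Rightarrow> nat \<Rightarrow> ('m::ab_group_add, 'k::field) rmod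
     \<Rightarrow> ('k fvec, 'k) rmod \<Rightarrow> ('k fvec, 'k) rmod \<Rightarrow> ('k fvec \<Rightarrow> 'k fvec) \<Rightarrow> ('k fvec \<Rightarrow> 'm) \<Rightarrow> bool" where
  "min_proj_pres n k M P1 P0 d e \<longleftrightarrow>
     fg_projective n k P1 \<and> fg_projective n k P0 \<and>
     rhom n k P1 P0 d \<and> rhom n k P0 M e \<and>
     e ` carr P0 = carr M \<and> d ` carr P1 = {x \<in> carr P0. e x = 0} \<and>
     superfluous n k {x \<in> carr P0. e x = 0} P0 \<and>
     superfluous n k {x \<in> carr P1. d x = 0} P1"

text \<open>A bounded complex of finitely generated projective modules (cohomological
  indexing, differential d i : C i -> C (i+1)).\<close>
definition proj_complex :: "nat \<Rightarrow> nat \<Rightarrow> (int \<Rightarrow> ('m::ab_group_add, 'k::field) rmod)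
     \<Rightarrow> (int \<Rightarrow> 'm \<Rightarrow> 'm) \<Rightarrow> bool" where
  "proj_complex n k C d \<longleftrightarrow> (\<forall>i. fg_projective n k (C i)) \<and> (\<forall>i. rhom n k (C i) (C (i+1)) (d i))
     \<and> (\<forall>i. \<forall>x\<in>carr (C i). d (i+1) (d i x) = 0) \<and> finite {i. carr (C i) \<noteq> {0}}"

definition sgn_shift :: "int \<Rightarrow> 'm::ab_group_add \<Rightarrow> 'm" where
  "sgn_shift s x = (if even s then x else - x)"

text \<open>Chain maps X -> X[s] (where X[s]^j = X^(j+s) with differential (-1)^s d).\<close>
definition chain_map_shift :: "nat \<Rightarrow> nat \<Rightarrow> (int \<Rightarrow> ('m::ab_group_add, 'k::field) rmod)
     \<Rightarrow> (int \<Rightarrow> 'm \<Rightarrow> 'm) \<Rightarrow> int \<Rightarrow> (int \<Rightarrow> 'm \<Rightarrow> 'm) \<Rightarrow> bool" where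
  "chain_map_shift n k C d s f \<longleftrightarrow> (\<forall>j. rhom n k (C j) (C (j+s)) (f j)) \<and>
     (\<forall>j. \<forall>x\<in>carr (C j). f (j+1) (d j x) = sgn_shift s (d (j+s) (f j x)))"

definition nullhomotopic_shift :: "nat \<Rightarrow> nat \<Rightarrow> (int \<Rightarrow> ('m::ab_group_add, 'k::field) rmod)
     \<Rightarrow> (int \<Rightarrow> 'm \<Rightarrow> 'm) \<Rightarrow> int \<Rightarrow> (int \<Rightarrow> 'm \<Rightarrow> 'm) \<Rightarrow> bool" where
  "nullhomotopic_shift n k C d s f \<longleftrightarrow> (\<exists>h. (\<forall>j. rhom n k (C j) (C (j+s-1)) (h j)) \<and>
     (\<forall>j. \<forall>x\<in>carr (C j). f j x = sgn_shift s (d (j+s-1) (h j x)) + h (j+1) (d j x)))"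

text \<open>Partial tilting: Hom(T, T[s]) = 0 for all s \<noteq> 0.  For bounded complexes of
  projectives, morphisms in D^b(A) are morphisms in the homotopy category K^b(proj A),
  so Hom(T,T[s]) = 0 means every chain map T -> T[s] is null-homotopic.\<close>
definition partial_tilting :: "nat \<Rightarrow> nat \<Rightarrow> (int \<Rightarrow> ('m::ab_group_add, 'k::field) rmod)
     \<Rightarrow> (int \<Rightarrow> 'm \<Rightarrow> 'm) \<Rightarrow> bool" where
  "partial_tilting n k C d \<longleftrightarrow> proj_complex n k C d \<and>
     (\<forall>s. s \<noteq> 0 \<longrightarrow> (\<forall>f. chain_map_shift n k C d s f \<longrightarrow> nullhomotopic_shift n k C d s f))"

definition pres_cx :: "('m::ab_group_add, 'k) rmod \<Rightarrow> ('m, 'k) rmod \<Rightarrow> int \<Rightarrow> ('m, 'k) rmod" where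
  "pres_cx P1 P0 = (\<lambda>i. if i = 0 then P1 else if i = 1 then P0 else ({0}, (\<lambda>_ _. 0)))"

definition pres_d :: "('m::ab_group_add \<Rightarrow> 'm) \<Rightarrow> int \<Rightarrow> 'm \<Rightarrow> 'm" where
  "pres_d d = (\<lambda>i. if i = 0 then d else (\<lambda>_. 0))"

definition alg_closed_field :: "'k::field itself \<Rightarrow> bool" where
  "alg_closed_field _ \<longleftrightarrow> (\<forall>p :: 'k poly. degree p > 0 \<longrightarrow> (\<exists>x. poly p x = 0))"

end

theory Submission
  imports Defs
begin


definition pp :: "nat \<Rightarrow> nat \<Rightarrow> nat \<Rightarrow> nat \<Rightarrow> ('k::field) alg" where
  "pp n k i l = (\<lambda>p. if p = (i mod n, l) \<and> l \<le> n*k then 1 else 0)"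

definition asc :: "'k::field \<Rightarrow> 'k alg \<Rightarrow> 'k alg" where
  "asc c a = (\<lambda>p. c * a p)"

lemma alg_mult_apply:
  "alg_mult n k a b (i,l) = (if i < n \<and> l \<le> n*k then (\<Sum>l1\<in>{0..l}. a (i, l1) * b ((i + l1) mod n, l - l1)) else 0)"
  by (simp add: alg_mult_def bpaths_def)

lemma pp_left:
  assumes "n > 0"
  shows "alg_mult n k (pp n k i s) b = (\<lambda>(j,l). if j = i mod n \<and> s \<le> l \<and> l \<le> n*k then b ((i+s) mod n, l - s) else 0)"
proof (rule ext, clarify)
  fix j l
  show "alg_mult n k (pp n k i s) b (j,l) = (if j = i mod n \<and> s \<le> l \<and> l \<le> n*k then b ((i+s) mod n, l - s) else 0)"
  proof (cases "j = i mod n \<and> s \<le> l \<and> l \<le> n*k")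
    case True
    then have "(\<Sum>l1\<in>{0..l}. pp n k i s (j, l1) * b ((j + l1) mod n, l - l1)) = 
       (\<Sum>l1\<in>{0..l}. if l1 = s then b ((j + s) mod n, l - s) else 0)"
      by (intro sum.cong) (auto simp: pp_def)
    also have "\<dots> = b ((j + s) mod n, l - s)" using True by simp
    finally show ?thesis using True assms by (simp add: alg_mult_apply mod_add_left_eq)
  next
    case False
    then show ?thesis
      by (auto simp: alg_mult_apply pp_def intro!: sum.neutral)
  qed
qed

lemma pp_right:
  shows "alg_mult n k b (pp n k j m) = (\<lambda>(i,l). if i < n \<and> l \<le> n*k \<and> m \<le> l \<and> (i + (l - m)) mod n = j mod n then b (i, l - m) else 0)"
proof (rule ext, clarify)
  fix i l
  show "alg_mult n k b (pp n k j m) (i,l) = (if i < n \<and> l \<le> n*k \<and> m \<le> l \<and> (i + (l - m)) mod n = j mod n then b (i, l - m) else 0)"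
  proof (cases "i < n \<and> l \<le> n*k \<and> m \<le> l \<and> (i + (l - m)) mod n = j mod n")
    case True
    then have "(\<Sum>l1\<in>{0..l}. b (i, l1) * pp n k j m ((i + l1) mod n, l - l1)) = 
       (\<Sum>l1\<in>{0..l}. if l1 = l - m then b (i, l - m) else 0)"
      by (intro sum.cong) (auto simp: pp_def)
    also have "\<dots> = b (i, l - m)" using True by simp
    moreover have "(i + l - m) mod n = j mod n" using True by (metis Nat.add_diff_assoc)
    ultimately show ?thesis using True by (simp add: alg_mult_apply)
  next
    case False
    then show ?thesis
      by (auto simp: alg_mult_apply pp_def intro!: sum.neutral)
  qed
qed


definition low :: "nat \<Rightarrow> ('k::field) alg \<Rightarrow> bool" where
  "low L a \<longleftrightarrow> (\<forall>j l. l < L \<longrightarrow> a (j,l) = 0)"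
definition starts :: "nat \<Rightarrow> nat \<Rightarrow> ('k::field) alg \<Rightarrow> bool" where
  "starts n i a \<longleftrightarrow> (\<forall>j l. j \<noteq> i mod n \<longrightarrow> a (j,l) = 0)"
definition ends :: "nat \<Rightarrow> nat \<Rightarrow> ('k::field) alg \<Rightarrow> bool" where
  "ends n m a \<longleftrightarrow> (\<forall>j l. a (j,l) \<noteq> 0 \<longrightarrow> (j + l) mod n = m mod n)"

lemma mod_cancel_nat: assumes h: "(x + t) mod n = (y + t) mod (n::nat)" shows "x mod n = y mod n"
proof (cases "n = 0")
  case True then show ?thesis using h by simp
next
  case False
  have t: "t \<le> n * t" using False by simp
  have "x mod n = (x + n*t) mod n" by simp
  also have "x + n*t = (x + t) + (n*t - t)" using t by simp
  also have "((x + t) + (n*t - t)) mod n = ((x + t) mod n + (n*t - t)) mod n" by (simp add: mod_add_left_eq)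
  also have "\<dots> = ((y + t) mod n + (n*t - t)) mod n" using h by simp
  also have "\<dots> = ((y + t) + (n*t - t)) mod n" by (simp add: mod_add_left_eq)
  also have "(y + t) + (n*t - t) = y + n*t" using t by simp
  finally show ?thesis by simp
qed

lemma is_alg_iff: "is_alg n k a \<longleftrightarrow> (\<forall>i l. \<not>(i<n \<and> l \<le> n*k) \<longrightarrow> a (i,l) = 0)"
  by (auto simp: is_alg_def bpaths_def)

lemma alg_add_eq: "alg_add a b = a + b"
  by (simp add: alg_add_def plus_fun_def)

locale bst = fixes n k :: nat assumes npos: "0 < n"
begin

abbreviation mul :: "'a::field alg \<Rightarrow> 'a alg \<Rightarrow> 'a alg" where "mul \<equiv> alg_mult n k"
abbreviation P :: "nat \<Rightarrow> nat \<Rightarrow> 'a::field alg" where "P \<equiv> pp n k"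
abbreviation ia :: "'a::field alg \<Rightarrow> bool" where "ia \<equiv> is_alg n k"

lemma ia_mult[simp]: "ia (mul a b)"
  by (simp add: is_alg_iff alg_mult_apply)
lemma ia_0[simp]: "ia 0" by (simp add: is_alg_iff)
lemma ia_add[simp]: "ia a \<Longrightarrow> ia b \<Longrightarrow> ia (a + b)" by (simp add: is_alg_iff)
lemma ia_uminus[simp]: "ia a \<Longrightarrow> ia (- a)" by (simp add: is_alg_iff)
lemma ia_diff[simp]: "ia a \<Longrightarrow> ia b \<Longrightarrow> ia (a - b)" by (simp add: is_alg_iff)
lemma ia_asc[simp]: "ia a \<Longrightarrow> ia (asc c a)" by (simp add: is_alg_iff asc_def)
lemma ia_pp[simp]: "ia (P i l)" using npos by (auto simp: is_alg_iff pp_def)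
lemma ia_one[simp]: "ia (alg_one n k)" by (auto simp: is_alg_iff alg_one_def)
lemma ia_sum: "finite S \<Longrightarrow> (\<And>x. x \<in> S \<Longrightarrow> ia (f x)) \<Longrightarrow> ia (\<Sum>x\<in>S. f x)"
  by (induction S rule: finite_induct) auto

lemma mult_assoc: "mul (mul a b) c = mul a (mul b c)"
proof (rule ext, clarify)
  fix i l
  show "mul (mul a b) c (i,l) = mul a (mul b c) (i,l)"
  proof (cases "i < n \<and> l \<le> n*k")
    case False
    then have "mul (mul a b) c (i,l) = 0" "mul a (mul b c) (i,l) = 0"
      by (auto simp only: alg_mult_apply split: if_split)
    then show ?thesis by simp
  next
    case True
    define g where "g x y = a (i,x) * b ((i+x) mod n, y) * c ((i+x+y) mod n, l - x - y)" for x y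
    have L1: "mul (mul a b) c (i,l) = (\<Sum>m\<in>{0..l}. mul a b (i,m) * c ((i+m) mod n, l - m))"
      using True by (simp add: alg_mult_apply)
    also have "\<dots> = (\<Sum>m\<le>l. \<Sum>x\<le>m. g x (m - x))"
      unfolding atLeast0AtMost
    proof (rule sum.cong[OF refl])
      fix m assume "m \<in> {..l}"
      then have m: "m \<le> l" by simp
      have "mul a b (i,m) * c ((i+m) mod n, l - m) =
            (\<Sum>x\<in>{0..m}. a (i,x) * b ((i+x) mod n, m - x)) * c ((i+m) mod n, l - m)"
        using True m by (simp add: alg_mult_apply)
      also have "\<dots> = (\<Sum>x\<le>m. a (i,x) * b ((i+x) mod n, m - x) * c ((i+m) mod n, l - m))"
        by (simp add: sum_distrib_right atLeast0AtMost)
      also have "\<dots> = (\<Sum>x\<le>m. g x (m - x))"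
        by (rule sum.cong[OF refl]) (auto simp: g_def)
      finally show "mul a b (i,m) * c ((i+m) mod n, l - m) = (\<Sum>x\<le>m. g x (m - x))" .
    qed
    finally have L: "mul (mul a b) c (i,l) = (\<Sum>m\<le>l. \<Sum>x\<le>m. g x (m - x))" .
    have R1: "mul a (mul b c) (i,l) = (\<Sum>x\<in>{0..l}. a (i,x) * mul b c ((i+x) mod n, l - x))"
      using True by (simp add: alg_mult_apply)
    also have "\<dots> = (\<Sum>x\<le>l. \<Sum>y\<le>l-x. g x y)"
      unfolding atLeast0AtMost
    proof (rule sum.cong[OF refl])
      fix x assume "x \<in> {..l}"
      then have x: "x \<le> l" by simp
      have "a (i,x) * mul b c ((i+x) mod n, l - x) =
            a (i,x) * (\<Sum>y\<in>{0..l-x}. b ((i+x) mod n, y) * c (((i+x) mod n + y) mod n, l - x - y))"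
      proof -
        have "l - x \<le> n*k" "(i+x) mod n < n" using True x npos by auto
        then show ?thesis by (simp add: alg_mult_apply)
      qed
      also have "\<dots> = (\<Sum>y\<le>l-x. g x y)"
        by (simp add: sum_distrib_left atLeast0AtMost g_def mod_add_left_eq mult.assoc)
      finally show "a (i,x) * mul b c ((i+x) mod n, l - x) = (\<Sum>y\<le>l-x. g x y)" .
    qed
    finally have R: "mul a (mul b c) (i,l) = (\<Sum>x\<le>l. \<Sum>y\<le>l-x. g x y)" .
    have "(\<Sum>x\<le>l. \<Sum>y\<le>l-x. g x y) = (\<Sum>(x,y)\<in>Sigma {..l} (\<lambda>x. {..l-x}). g x y)"
      by (simp add: sum.Sigma)
    also have "Sigma {..l} (\<lambda>x. {..l-x}) = {(x,y). x+y \<le> l}" by auto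
    also have "(\<Sum>(x,y)\<in>{(x,y). x+y \<le> l}. g x y) = (\<Sum>m\<le>l. \<Sum>x\<le>m. g x (m - x))"
      by (rule sum.triangle_reindex_eq)
    finally show ?thesis using L R by simp
  qed
qed

lemma mult_add_left: "mul (a + b) c = mul a c + mul b c"
  by (rule ext, auto simp: alg_mult_def algebra_simps sum.distrib)
lemma mult_add_right: "mul a (b + c) = mul a b + mul a c"
  by (rule ext, auto simp: alg_mult_def algebra_simps sum.distrib)
lemma mult_uminus_left: "mul (- a) b = - mul a b"
  by (rule ext, auto simp: alg_mult_def sum_negf)
lemma mult_uminus_right: "mul a (- b) = - mul a b"
  by (rule ext, auto simp: alg_mult_def sum_negf)
lemma mult_diff_left: "mul (a - b) c = mul a c - mul b c"
  using mult_add_left[of a "-b" c] by (simp add: mult_uminus_left)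
lemma mult_diff_right: "mul a (b - c) = mul a b - mul a c"
  using mult_add_right[of a b "-c"] by (simp add: mult_uminus_right)
lemma mult_0_left[simp]: "mul 0 b = 0"
  by (rule ext, auto simp: alg_mult_def)
lemma mult_0_right[simp]: "mul a 0 = 0"
  by (rule ext, auto simp: alg_mult_def)
lemma mult_asc_left: "mul (asc c a) b = asc c (mul a b)"
  by (rule ext, auto simp: alg_mult_def asc_def sum_distrib_left mult.assoc)
lemma mult_asc_right: "mul a (asc c b) = asc c (mul a b)"
  by (rule ext, auto simp: alg_mult_def asc_def sum_distrib_left mult_ac)

lemma one_left: assumes "ia a" shows "mul (alg_one n k) a = a"
proof (rule ext, clarify)
  fix i l
  show "mul (alg_one n k) a (i,l) = a (i,l)"
  proof (cases "i < n \<and> l \<le> n*k")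
    case False then show ?thesis using assms by (auto simp: alg_mult_apply is_alg_iff)
  next
    case True
    have "(\<Sum>l1\<in>{0..l}. alg_one n k (i, l1) * a ((i + l1) mod n, l - l1)) =
          (\<Sum>l1\<in>{0..l}. if l1 = 0 then a (i,l) else 0)"
      using True by (intro sum.cong) (auto simp: alg_one_def)
    then show ?thesis using True by (simp add: alg_mult_apply)
  qed
qed

lemma one_right: assumes "ia a" shows "mul a (alg_one n k) = a"
proof (rule ext, clarify)
  fix i l
  show "mul a (alg_one n k) (i,l) = a (i,l)"
  proof (cases "i < n \<and> l \<le> n*k")
    case False then show ?thesis using assms by (auto simp: alg_mult_apply is_alg_iff)
  next
    case True
    have "(\<Sum>l1\<in>{0..l}. a (i, l1) * alg_one n k ((i + l1) mod n, l - l1)) =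
          (\<Sum>l1\<in>{0..l}. if l1 = l then a (i,l) else 0)"
      using True npos by (intro sum.cong) (auto simp: alg_one_def)
    then show ?thesis using True by (simp add: alg_mult_apply)
  qed
qed

lemma pp_pp: "mul (P i s) (P j m) = (if (i+s) mod n = j mod n then P i (s+m) else 0)"
  unfolding pp_left[OF npos] by (auto simp: pp_def fun_eq_iff)

lemma pp_big: "l > n*k \<Longrightarrow> P i l = 0"
  by (auto simp: pp_def fun_eq_iff)

lemma e_left: "ia a \<Longrightarrow> mul (P i 0) a = (\<lambda>(j,l). if j = i mod n then a (j,l) else 0)"
  using npos by (auto simp: pp_left fun_eq_iff is_alg_iff)

lemma e_right: "ia a \<Longrightarrow> mul a (P m 0) = (\<lambda>(j,l). if (j + l) mod n = m mod n then a (j,l) else 0)"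
  by (auto simp: pp_right fun_eq_iff is_alg_iff)

lemma low_mult: "low p a \<Longrightarrow> low q b \<Longrightarrow> low (p+q) (mul a b)"
  unfolding low_def
proof (intro allI impI)
  fix j l assume a: "\<forall>j l. l < p \<longrightarrow> a (j, l) = 0" and b: "\<forall>j l. l < q \<longrightarrow> b (j, l) = 0"
    and l: "l < p + q"
  have Z: "\<forall>x\<in>{0..l}. a (j, x) * b ((j + x) mod n, l - x) = 0"
  proof
    fix x assume "x \<in> {0..l}"
    show "a (j, x) * b ((j + x) mod n, l - x) = 0"
    proof (cases "x < p")
      case True then show ?thesis using a by simp
    next
      case False then have "l - x < q" using l `x \<in> {0..l}` by auto
      then show ?thesis using b by simp
    qed
  qed
  have "(\<Sum>x\<in>{0..l}. a (j, x) * b ((j + x) mod n, l - x)) = 0"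
    using Z by (intro sum.neutral) blast
  then show "mul a b (j,l) = 0" by (simp add: alg_mult_apply)
qed
lemma low_mult_l: "low p a \<Longrightarrow> low p (mul a b)"
  using low_mult[of p a 0 b] by (simp add: low_def)
lemma low_mult_r: "low q b \<Longrightarrow> low q (mul a b)"
  using low_mult[of 0 a q b] by (simp add: low_def)
lemma low_pp: "low s (P i s)" by (simp add: low_def pp_def)
lemma low_mono: "low p a \<Longrightarrow> q \<le> p \<Longrightarrow> low q a" by (simp add: low_def)
lemma low_add: "low p a \<Longrightarrow> low p b \<Longrightarrow> low p (a + b)" by (simp add: low_def)
lemma low_uminus: "low p a \<Longrightarrow> low p (- a)" by (simp add: low_def)
lemma low_diff: "low p a \<Longrightarrow> low p b \<Longrightarrow> low p (a - b)" by (simp add: low_def)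
lemma low_0[simp]: "low p 0" by (simp add: low_def)
lemma low_asc: "low p a \<Longrightarrow> low p (asc c a)" by (simp add: low_def asc_def)
lemma low_big: "ia a \<Longrightarrow> low (n*k+1) a \<Longrightarrow> a = 0"
  unfolding low_def is_alg_iff fun_eq_iff
proof (intro allI)
  fix p :: "nat \<times> nat"
  assume a1: "\<forall>i l. \<not> (i < n \<and> l \<le> n * k) \<longrightarrow> a (i, l) = 0" and a2: "\<forall>j l. l < n * k + 1 \<longrightarrow> a (j, l) = 0"
  obtain i l where p: "p = (i,l)" by (cases p)
  show "a p = 0 p"
  proof (cases "l < n*k+1")
    case True then show ?thesis using a2 p by simp
  next
    case False then show ?thesis using a1 p by simp
  qed
qed

lemma starts_mult: "starts n i a \<Longrightarrow> starts n i (mul a b)"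
  unfolding starts_def
proof (intro allI impI)
  fix j l assume a: "\<forall>j l. j \<noteq> i mod n \<longrightarrow> a (j, l) = 0" and j: "j \<noteq> i mod n"
  have "(\<Sum>x\<in>{0..l}. a (j, x) * b ((j + x) mod n, l - x)) = 0"
    using a j by (intro sum.neutral) simp
  then show "mul a b (j,l) = 0" by (simp add: alg_mult_apply)
qed
lemma starts_pp: "starts n i (P i l)" by (simp add: starts_def pp_def)
lemma starts_e: assumes "ia a" "starts n i a" shows "mul (P i 0) a = a"
proof (rule ext, clarify)
  fix j l show "mul (P i 0) a (j,l) = a (j,l)"
    using assms(2) unfolding e_left[OF assms(1)] starts_def by auto
qed
lemma starts_add: "starts n i a \<Longrightarrow> starts n i b \<Longrightarrow> starts n i (a + b)" by (simp add: starts_def)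
lemma starts_diff: "starts n i a \<Longrightarrow> starts n i b \<Longrightarrow> starts n i (a - b)" by (simp add: starts_def)
lemma starts_asc: "starts n i a \<Longrightarrow> starts n i (asc c a)" by (simp add: starts_def asc_def)

lemma ends_mult: "ends n m b \<Longrightarrow> ends n m (mul a b)"
proof -
  assume b: "ends n m b"
  show ?thesis unfolding ends_def
  proof (intro allI impI)
    fix j l assume "mul a b (j,l) \<noteq> 0"
    then have "(\<Sum>x\<in>{0..l}. a (j, x) * b ((j + x) mod n, l - x)) \<noteq> 0"
      by (simp add: alg_mult_apply split: if_splits)
    then obtain l1 where "l1 \<in> {0..l}" "a (j, l1) * b ((j + l1) mod n, l - l1) \<noteq> 0"
      by (rule sum.not_neutral_contains_not_neutral)
    then have l1: "l1 \<le> l" "b ((j + l1) mod n, l - l1) \<noteq> 0" by auto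
    then have "((j + l1) mod n + (l - l1)) mod n = m mod n" using b unfolding ends_def by blast
    then show "(j + l) mod n = m mod n" using l1
      by (metis mod_add_left_eq add.assoc le_add_diff_inverse)
  qed
qed
lemma ends_pp: "ends n (j + l) (P j l)"
  by (auto simp: ends_def pp_def mod_add_left_eq)
lemma ends_e: assumes "ia a" "ends n m a" shows "mul a (P m 0) = a"
proof (rule ext, clarify)
  fix j l show "mul a (P m 0) (j,l) = a (j,l)"
    using assms(2) unfolding e_right[OF assms(1)] ends_def by auto
qed

lemma ldiv:
  assumes "ia a" "starts n i a" "low s a"
  shows "\<exists>a'. ia a' \<and> a = mul (P i s) a'"
proof -
  define a' where "a' = (\<lambda>(j,l). if j = (i+s) mod n then a (i mod n, l + s) else (0::'a))"
  have "ia a'" using assms(1) npos by (auto simp: a'_def is_alg_iff)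
  moreover have "a = mul (P i s) a'"
  proof (rule ext, clarify)
    fix j l
    show "a (j,l) = mul (P i s) a' (j,l)"
    proof (cases "j = i mod n \<and> s \<le> l \<and> l \<le> n*k")
      case True
      then show ?thesis unfolding pp_left[OF npos] by (simp add: a'_def)
    next
      case False
      then have "a (j,l) = 0" using assms(1,2,3) npos
        unfolding starts_def low_def is_alg_iff by (metis mod_less_divisor not_le)
      then show ?thesis using False unfolding pp_left[OF npos] by auto
    qed
  qed
  ultimately show ?thesis by blast
qed

lemma rdiv:
  assumes "ia a" "ends n (j + t) a" "low t a"
  shows "\<exists>a'. ia a' \<and> a = mul a' (P j t)"
proof -
  define a' where "a' = (\<lambda>(i,l). if l + t \<le> n*k then a (i, l + t) else (0::'a))"
  have "ia a'" using assms(1) by (auto simp: a'_def is_alg_iff)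
  moreover have "a = mul a' (P j t)"
  proof (rule ext, clarify)
    fix i l
    show "a (i,l) = mul a' (P j t) (i,l)"
    proof (cases "a (i,l) = 0")
      case True
      then show ?thesis by (auto simp: pp_right a'_def)
    next
      case False
      then have c: "i < n" "l \<le> n*k" "t \<le> l" "(i + l) mod n = (j + t) mod n"
        using assms by (auto simp: is_alg_iff low_def ends_def) (meson not_le)
      then have "(i + (l - t)) mod n = j mod n"
        using mod_cancel_nat[of "i + (l - t)" t n j] by simp
      then show ?thesis using c by (simp add: pp_right a'_def)
    qed
  qed
  ultimately show ?thesis by blast
qed

lemma starts_ends_low:
  assumes "starts n i c" "ends n (i + h) c" "h < n"
  shows "low h c"
  unfolding low_def
proof (intro allI impI)
  fix j t assume "t < h"
  show "c (j,t) = 0"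
  proof (rule ccontr)
    assume nz: "c (j,t) \<noteq> 0"
    then have "j = i mod n" using assms(1) by (auto simp: starts_def)
    moreover have "(j + t) mod n = (i + h) mod n" using nz assms(2) by (auto simp: ends_def)
    ultimately have "(t + i) mod n = (h + i) mod n"
      by (metis add.commute mod_add_right_eq)
    then have "t mod n = h mod n" by (rule mod_cancel_nat)
    then show False using `t < h` `h < n` by simp
  qed
qed

end


locale bmod = bst n k for n k :: nat +
  fixes M :: "('m::ab_group_add, 'a::field) rmod"
  assumes rm: "rmodule n k M"
begin

abbreviation C where "C \<equiv> carr M"
abbreviation ac where "ac \<equiv> act M"

lemma zero_in[simp]: "0 \<in> C" using rm by (simp add: rmodule_def)
lemma add_in[simp]: "x \<in> C \<Longrightarrow> y \<in> C \<Longrightarrow> x + y \<in> C" using rm by (simp add: rmodule_def)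
lemma uminus_in[simp]: "x \<in> C \<Longrightarrow> - x \<in> C" using rm by (simp add: rmodule_def)
lemma diff_in[simp]: "x \<in> C \<Longrightarrow> y \<in> C \<Longrightarrow> x - y \<in> C"
  using add_in[of x "-y"] by simp
lemma ac_in[simp]: "x \<in> C \<Longrightarrow> ia a \<Longrightarrow> ac x a \<in> C" using rm by (simp add: rmodule_def)
lemma ac_add_v: "x \<in> C \<Longrightarrow> y \<in> C \<Longrightarrow> ia a \<Longrightarrow> ac (x + y) a = ac x a + ac y a"
  using rm by (simp add: rmodule_def)
lemma ac_add_a: "x \<in> C \<Longrightarrow> ia a \<Longrightarrow> ia b \<Longrightarrow> ac x (a + b) = ac x a + ac x b"
  using rm by (simp add: rmodule_def alg_add_eq)
lemma ac_mult: "x \<in> C \<Longrightarrow> ia a \<Longrightarrow> ia b \<Longrightarrow> ac x (mul a b) = ac (ac x a) b"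
  using rm by (simp add: rmodule_def)
lemma ac_one: "x \<in> C \<Longrightarrow> ac x (alg_one n k) = x"
  using rm by (simp add: rmodule_def)
lemma ac_0a[simp]: "x \<in> C \<Longrightarrow> ac x 0 = 0"
  using ac_add_a[of x 0 0] by simp
lemma ac_0v[simp]: "ia a \<Longrightarrow> ac 0 a = 0"
  using ac_add_v[of 0 0 a] by simp
lemma ac_uminus_a: "x \<in> C \<Longrightarrow> ia a \<Longrightarrow> ac x (- a) = - ac x a"
  using ac_add_a[of x a "-a"] by simp (metis add.commute eq_neg_iff_add_eq_0)
lemma ac_uminus_v: "x \<in> C \<Longrightarrow> ia a \<Longrightarrow> ac (- x) a = - ac x a"
  using ac_add_v[of x "-x" a] by simp (metis add.commute eq_neg_iff_add_eq_0)
lemma ac_diff_a: "x \<in> C \<Longrightarrow> ia a \<Longrightarrow> ia b \<Longrightarrow> ac x (a - b) = ac x a - ac x b"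
  using ac_add_a[of x a "-b"] ac_uminus_a[of x b] by simp
lemma ac_diff_v: "x \<in> C \<Longrightarrow> y \<in> C \<Longrightarrow> ia a \<Longrightarrow> ac (x - y) a = ac x a - ac y a"
  using ac_add_v[of x "-y" a] ac_uminus_v[of y a] by simp
lemma ac_sum_a: assumes x: "x \<in> C" shows "finite S \<Longrightarrow> (\<And>s. s \<in> S \<Longrightarrow> ia (f s)) \<Longrightarrow> ac x (\<Sum>s\<in>S. f s) = (\<Sum>s\<in>S. ac x (f s))"
proof (induction S rule: finite_induct)
  case empty then show ?case by (metis ac_0a x sum.empty)
next
  case (insert s S)
  have IH: "ac x (sum f S) = (\<Sum>s\<in>S. ac x (f s))" using insert.IH insert.prems by blast
  have "ac x (sum f (insert s S)) = ac x (f s + sum f S)" by (simp only: sum.insert[OF insert(1,2)])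
  also have "\<dots> = ac x (f s) + ac x (sum f S)" using insert x by (intro ac_add_a ia_sum) auto
  also have "\<dots> = ac x (f s) + (\<Sum>s\<in>S. ac x (f s))" by (simp only: IH)
  also have "\<dots> = (\<Sum>s\<in>insert s S. ac x (f s))" by (simp only: sum.insert[OF insert(1,2)])
  finally show ?case .
qed

lemma sub_facts:
  assumes "submodule n k U M"
  shows "U \<subseteq> C" "0 \<in> U" "\<And>u w. u \<in> U \<Longrightarrow> w \<in> U \<Longrightarrow> u + w \<in> U"
    "\<And>u. u \<in> U \<Longrightarrow> - u \<in> U" "\<And>u a. u \<in> U \<Longrightarrow> ia a \<Longrightarrow> ac u a \<in> U"
  using assms by (auto simp: submodule_def)

lemma sub_diff: "submodule n k U M \<Longrightarrow> u \<in> U \<Longrightarrow> w \<in> U \<Longrightarrow> u - w \<in> U"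
  by (metis sub_facts(3,4) diff_conv_add_uminus)

lemma asc_as_mult: "ia a \<Longrightarrow> asc c a = mul a (asc c (alg_one n k))"
  by (simp add: mult_asc_right one_right)

lemma scalar_cancel:
  assumes U: "submodule n k U M" and x: "x \<in> C" and a: "ia a" and c: "c \<noteq> 0"
    and h: "ac x (asc c a) \<in> U"
  shows "ac x a \<in> U"
proof -
  have "mul (asc c a) (asc (1/c) (alg_one n k)) = a"
    using a c by (simp add: mult_asc_right mult_asc_left one_right) (simp add: asc_def fun_eq_iff)
  then have "ac x a = ac (ac x (asc c a)) (asc (1/c) (alg_one n k))"
    using ac_mult[of x "asc c a" "asc (1/c) (alg_one n k)"] x a by simp
  then show ?thesis using sub_facts(5)[OF U h] by simp
qed

lemma sub_zero: "submodule n k {0} M"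
  by (auto simp: submodule_def)

lemma U_lemma:
  assumes U: "submodule n k U M" and x: "x \<in> C" and i: "i < n" and hx: "ac x (P i 0) = x"
    and a: "ia a" and xa: "ac x a \<in> U" and below: "\<forall>t<t0. a (i,t) = 0" and nz: "a (i,t0) \<noteq> 0"
  shows "ac x (P i t0) \<in> U"
proof -
  define a1 where "a1 = mul (P i 0) a"
  define c where "c = a (i,t0)"
  define w1 where "w1 = a1 - asc c (P i t0)"
  have ia1: "ia a1" "ia w1" using a by (auto simp: a1_def w1_def)
  have xa1: "ac x a1 = ac x a" using ac_mult[of x "P i 0" a] x a hx by (simp add: a1_def)
  have a1e: "a1 = (\<lambda>(j,l). if j = i then a (j,l) else 0)" using e_left[OF a, of i] i by (simp add: a1_def)
  have t0le: "t0 \<le> n*k" using nz a i by (auto simp: is_alg_iff)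
  have lw1: "low (t0+1) w1"
    unfolding low_def
  proof (intro allI impI)
    fix j l assume "l < t0 + 1"
    then show "w1 (j,l) = 0"
      using below t0le by (cases "l = t0") (auto simp: w1_def a1e c_def asc_def pp_def i)
  qed
  have sw1: "starts n i w1"
    unfolding w1_def a1_def by (intro starts_diff starts_mult starts_pp starts_asc)
  have main: "\<forall>s. t0 \<le> s \<longrightarrow> ac x (P i s) \<in> U"
  proof -
    have "\<forall>s. n*k + 1 - s = d \<longrightarrow> t0 \<le> s \<longrightarrow> ac x (P i s) \<in> U" for d
    proof (induction d rule: less_induct)
      case (less d)
      show ?case
      proof (intro allI impI)
        fix s assume d: "n*k + 1 - s = d" and s0: "t0 \<le> s"
        show "ac x (P i s) \<in> U"
        proof (cases "s \<le> n*k")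
          case False
          then have "P i s = 0" using pp_big[of s i] by simp
          then show ?thesis using x sub_facts(2)[OF U] ac_0a[OF x] by metis
        next
          case True
          have IH: "ac x (P i (s+1)) \<in> U" using less[of "n*k + 1 - (s+1)"] d True s0 by auto
          define q where "q = (P (i + t0) (s - t0) :: 'a alg)"
          have a1w: "a1 = w1 + asc c (P i t0)" by (simp add: w1_def)
          have pq: "mul (P i t0) q = P i s" using s0 by (simp add: q_def pp_pp)
          have m1: "mul a1 q = mul w1 q + asc c (P i s)"
            by (simp add: a1w mult_add_left mult_asc_left pq)
          have "low (t0 + 1 + (s - t0)) (mul w1 q)" unfolding q_def by (rule low_mult[OF lw1 low_pp])
          then have "low (s+1) (mul w1 q)" using s0 by simp
          moreover have "starts n i (mul w1 q)" by (rule starts_mult[OF sw1])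
          ultimately obtain r where r: "ia r" "mul w1 q = mul (P i (s+1)) r"
            using ldiv[of "mul w1 q" i "s+1"] by auto
          have A: "ac x (mul w1 q) \<in> U"
            using r ac_mult[of x "P i (s+1)" r] x sub_facts(5)[OF U IH r(1)] by simp
          have B: "ac x (mul a1 q) \<in> U"
            using ac_mult[of x a1 q] x ia1 xa1 sub_facts(5)[OF U xa] by (simp add: q_def)
          have "ac x (asc c (P i s)) = ac x (mul a1 q) - ac x (mul w1 q)"
            using m1 ac_add_a[of x "mul w1 q" "asc c (P i s)"] x by simp
          then have "ac x (asc c (P i s)) \<in> U" using sub_diff[OF U B A] by simp
          then show ?thesis using scalar_cancel[OF U x, of "P i s" c] nz by (simp add: c_def)
        qed
      qed
    qed
    then show ?thesis by blast
  qed
  then show ?thesis by simp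
qed

end


lemma sum_fun_apply: "finite S \<Longrightarrow> (sum f S) x = (\<Sum>s\<in>S. f s x)"
  by (induction S rule: finite_induct) auto

context bst begin
lemma one_sum: "(alg_one n k :: 'a::field alg) = (\<Sum>j<n. P j 0)"
proof (rule ext, clarify)
  fix i l
  have "(\<Sum>j<n. P j 0 :: 'a alg) (i,l) = (\<Sum>j<n. (P j 0 :: 'a alg) (i,l))" by (simp add: sum_fun_apply)
  also have "\<dots> = (\<Sum>j<n. if j = i \<and> l = 0 then 1 else 0)"
    by (intro sum.cong) (auto simp: pp_def)
  also have "\<dots> = (alg_one n k :: 'a alg) (i,l)" by (auto simp: alg_one_def)
  finally show "(alg_one n k :: 'a alg) (i,l) = (\<Sum>j<n. P j 0 :: 'a alg) (i,l)" by (rule sym)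
qed
end

context bmod begin

abbreviation Q :: "nat \<Rightarrow> nat \<Rightarrow> 'a alg" where "Q \<equiv> pp n k"

definition homog where "homog w j \<longleftrightarrow> w \<in> C \<and> j < n \<and> ac w (Q j 0) = w"
definition ht where "ht j w = (LEAST t. ac w (Q j t) = 0)"
definition vA where "vA v = {ac v a | a. ia a}"

lemma sub_sum: assumes U: "submodule n k U M" shows "finite S \<Longrightarrow> (\<And>s. s \<in> S \<Longrightarrow> f s \<in> U) \<Longrightarrow> (\<Sum>s\<in>S. f s) \<in> U"
proof (induction S rule: finite_induct)
  case empty then show ?case using sub_facts(2)[OF U] by simp
next
  case (insert s S) then show ?case using sub_facts(3)[OF U] by simp
qed

lemma ac_e_pp: "x \<in> C \<Longrightarrow> ac x (Q j 0) = x \<Longrightarrow> ac (ac x (Q j t)) (Q (j+t) 0) = ac x (Q j t)"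
  using ac_mult[of x "Q j t" "Q (j+t) 0"] by (simp add: pp_pp)

lemma homog_P: "x \<in> C \<Longrightarrow> j < n \<Longrightarrow> homog (ac x (Q j 0)) j"
  using ac_mult[of x "Q j 0" "Q j 0"] by (simp add: homog_def pp_pp)

lemma big_zero: assumes "w \<in> C" shows "ac w (Q j (n*k+1)) = 0"
proof -
  have "Q j (n*k+1) = 0" by (simp add: pp_big)
  then show ?thesis using ac_0a[OF assms] by metis
qed

lemma ht_le: "homog w j \<Longrightarrow> ht j w \<le> n*k+1"
  unfolding ht_def homog_def by (rule Least_le) (use big_zero[of w j] in auto)

lemma ht_zero: assumes "homog w j" shows "ac w (Q j (ht j w)) = 0"
  unfolding ht_def by (rule LeastI[of _ "n*k+1"]) (use assms big_zero in \<open>simp add: homog_def\<close>)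

lemma ht_above: assumes w: "homog w j" and t: "ht j w \<le> t" shows "ac w (Q j t) = 0"
proof -
  have "Q j t = mul (Q j (ht j w)) (Q (j + ht j w) (t - ht j w))" using t by (simp add: pp_pp)
  then have "ac w (Q j t) = ac (ac w (Q j (ht j w))) (Q (j + ht j w) (t - ht j w))"
    using ac_mult[of w "Q j (ht j w)" "Q (j + ht j w) (t - ht j w)"] w by (simp add: homog_def)
  then show ?thesis using ht_zero[OF w] ac_0v[of "Q (j + ht j w) (t - ht j w)"] by simp
qed

lemma ht_below: "t < ht j w \<Longrightarrow> ac w (Q j t) \<noteq> 0"
  unfolding ht_def by (rule not_less_Least)

lemma nonzero_homog: assumes "w \<in> C" "w \<noteq> 0" shows "\<exists>j<n. ac w (Q j 0) \<noteq> 0"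
proof (rule ccontr)
  assume "\<not> ?thesis"
  then have "\<forall>j<n. ac w (Q j 0) = 0" by auto
  moreover have "w = (\<Sum>j<n. ac w (Q j 0))"
    using ac_one[OF assms(1)] ac_sum_a[OF assms(1), of "{..<n}" "\<lambda>j. Q j 0"] by (simp add: one_sum)
  ultimately show False using assms(2) by simp
qed


lemma vA_sub: "v \<in> C \<Longrightarrow> vA v \<subseteq> C" by (auto simp: vA_def)
lemma vA_in: "ia a \<Longrightarrow> ac v a \<in> vA v" by (auto simp: vA_def)
lemma vA_ac: assumes "v \<in> C" "x \<in> vA v" "ia a" shows "ac x a \<in> vA v"
proof -
  obtain c where c: "ia c" "x = ac v c" using assms(2) by (auto simp: vA_def)
  then have "ac x a = ac v (mul c a)" using ac_mult[of v c a] assms by simp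
  then show ?thesis by (simp add: vA_in)
qed
lemma vA_add: assumes "v \<in> C" "x \<in> vA v" "y \<in> vA v" shows "x + y \<in> vA v"
proof -
  obtain c where c: "ia c" "x = ac v c" using assms(2) by (auto simp: vA_def)
  obtain d where d: "ia d" "y = ac v d" using assms(3) by (auto simp: vA_def)
  have "x + y = ac v (c + d)" using c d assms(1) by (simp add: ac_add_a)
  then show ?thesis using c d by (simp add: vA_in)
qed
lemma vA_uminus: assumes "v \<in> C" "x \<in> vA v" shows "- x \<in> vA v"
proof -
  obtain c where c: "ia c" "x = ac v c" using assms(2) by (auto simp: vA_def)
  have "- x = ac v (- c)" using c assms(1) by (simp add: ac_uminus_a)
  then show ?thesis using c by (simp add: vA_in)
qed
lemma vA_submodule: "v \<in> C \<Longrightarrow> submodule n k (vA v) M"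
  unfolding submodule_def using vA_sub vA_add vA_uminus vA_ac vA_in[of 0 v]
  by (auto simp: vA_def)

definition gp where "gp v N g \<longleftrightarrow> (\<forall>y\<in>N. g y \<in> vA v) \<and> (\<forall>y1\<in>N. \<forall>y2\<in>N. g (y1+y2) = g y1 + g y2)
   \<and> (\<forall>y\<in>N. \<forall>a. ia a \<longrightarrow> g (ac y a) = ac (g y) a) \<and> (\<forall>a. ia a \<longrightarrow> g (ac v a) = ac v a)"

lemma gp_0: assumes "submodule n k N M" "gp v N g" shows "g 0 = 0"
proof -
  have "g (0 + 0) = g 0 + g 0" using assms(2) sub_facts(2)[OF assms(1)] unfolding gp_def by blast
  then show ?thesis by simp
qed
lemma gp_diff: assumes N: "submodule n k N M" and g: "gp v N g" and y: "y1 \<in> N" "y2 \<in> N"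
  shows "g (y1 - y2) = g y1 - g y2"
proof -
  have "y1 - y2 \<in> N" using sub_diff[OF N y] .
  then have "g ((y1 - y2) + y2) = g (y1 - y2) + g y2" using g y unfolding gp_def by blast
  then show ?thesis by (simp add: eq_diff_eq)
qed

end

locale bmax = bmod n k M for n k :: nat and M :: "('m::ab_group_add, 'a::field) rmod" +
  fixes v i h
  assumes v_hom: "homog v i" and v_nz: "v \<noteq> 0" and h_def: "h = ht i v"
    and hmax: "\<And>w j. homog w j \<Longrightarrow> ac w (Q j h) = 0"
begin

lemma vC: "v \<in> C" and i_lt: "i < n" and ve: "ac v (Q i 0) = v"
  using v_hom by (auto simp: homog_def)

lemma h_le: "h \<le> n*k+1" using ht_le[OF v_hom] h_def by simp
lemma h_pos: "1 \<le> h"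
proof (rule ccontr)
  assume "\<not> 1 \<le> h" then have "h = 0" by simp
  then have "ac v (Q i 0) = 0" using ht_zero[OF v_hom] h_def by simp
  then show False using ve v_nz by simp
qed

lemma ann: assumes a: "ia a" shows "ac v a = 0 \<longleftrightarrow> (\<forall>t<h. a (i,t) = 0)"
proof
  assume va: "ac v a = 0"
  show "\<forall>t<h. a (i,t) = 0"
  proof (rule ccontr)
    assume "\<not> (\<forall>t<h. a (i,t) = 0)"
    then obtain t where t: "t < h" "a (i,t) \<noteq> 0" by auto
    define t1 where "t1 = (LEAST t. a (i,t) \<noteq> 0)"
    have t1: "a (i,t1) \<noteq> 0" "t1 \<le> t"
      using t unfolding t1_def by (metis (mono_tags, lifting) LeastI) (metis (mono_tags, lifting) Least_le t(2))
    have below: "\<forall>s<t1. a (i,s) = 0" unfolding t1_def using not_less_Least by blast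
    have "ac v (Q i t1) \<in> {0}"
      using U_lemma[OF sub_zero vC i_lt ve a _ below t1(1)] va by simp
    then show False using ht_below[of t1 i v] h_def t t1 by simp
  qed
next
  assume low_a: "\<forall>t<h. a (i,t) = 0"
  define a1 where "a1 = mul (Q i 0) a"
  have s1: "starts n i a1" unfolding a1_def by (intro starts_mult starts_pp)
  have l1: "low h a1" unfolding low_def a1_def using e_left[OF a, of i] i_lt low_a by auto
  obtain a' where a': "ia a'" "a1 = mul (Q i h) a'" using ldiv[OF _ s1 l1] by (auto simp: a1_def)
  have "ac v a = ac v a1" using ac_mult[of v "Q i 0" a] a ve vC by (simp add: a1_def)
  also have "\<dots> = ac (ac v (Q i h)) a'" using a' ac_mult[of v "Q i h" a'] vC by simp
  also have "\<dots> = 0" using ht_zero[OF v_hom] h_def a'(1) by simp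
  finally show "ac v a = 0" .
qed


lemma least_nz:
  fixes a :: "'a alg" and j t :: nat
  assumes "a (j,t) \<noteq> 0"
  shows "\<exists>t1\<le>t. a (j,t1) \<noteq> 0 \<and> (\<forall>s<t1. a (j,s) = 0)"
proof -
  define t1 where "t1 = (LEAST t. a (j,t) \<noteq> 0)"
  have "a (j,t1) \<noteq> 0"
    using assms unfolding t1_def by (metis (mono_tags, lifting) LeastI)
  moreover have "t1 \<le> t"
    using assms unfolding t1_def by (metis (mono_tags, lifting) Least_le)
  moreover have "\<forall>s<t1. a (j,s) = 0" unfolding t1_def using not_less_Least by blast
  ultimately show ?thesis by blast
qed

lemma baer_step:
  assumes N: "submodule n k N M" and g: "gp v N g" and w: "homog w j"
  shows "\<exists>z\<in>vA v. \<forall>b. ia b \<longrightarrow> ac w b \<in> N \<longrightarrow> g (ac w b) = ac z b"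
proof -
  have wC: "w \<in> C" and j: "j < n" and we: "ac w (Q j 0) = w" using w by (auto simp: homog_def)
  define t0 where "t0 = (LEAST t. ac w (Q j t) \<in> N)"
  have wh: "ac w (Q j h) = 0" using hmax[OF w] .
  have t0h: "t0 \<le> h" unfolding t0_def by (rule Least_le) (use wh sub_facts(2)[OF N] in simp)
  define y0 where "y0 = ac w (Q j t0)"
  have y0N: "y0 \<in> N" unfolding y0_def t0_def by (rule LeastI[of _ h]) (use wh sub_facts(2)[OF N] in simp)
  have y0C: "y0 \<in> C" using y0N sub_facts(1)[OF N] by auto
  have gy0: "g y0 \<in> vA v" using g y0N by (auto simp: gp_def)
  then obtain c where c: "ia c" "g y0 = ac v c" by (auto simp: vA_def)
  have gy0C: "g y0 \<in> C" using gy0 vA_sub[OF vC] by auto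
  have y0e: "ac y0 (Q (j+t0) 0) = y0" unfolding y0_def by (rule ac_e_pp[OF wC we])
  have z0e: "ac (g y0) (Q (j+t0) 0) = g y0"
    using g y0N y0e unfolding gp_def by (metis ia_pp)
  define c' where "c' = mul (mul (Q i 0) c) (Q (j+t0) 0)"
  have iac': "ia c'" by (simp add: c'_def)
  have vc': "ac v c' = g y0"
  proof -
    have "ac v c' = ac (ac (ac v (Q i 0)) c) (Q (j+t0) 0)"
      unfolding c'_def using vC c(1) by (simp add: ac_mult)
    also have "\<dots> = g y0" using ve c z0e by simp
    finally show ?thesis .
  qed
  define q where "q = Q (j+t0) (h - t0)"
  have y0q: "ac y0 q = 0"
  proof -
    have "ac y0 q = ac w (mul (Q j t0) q)" unfolding y0_def q_def using wC by (simp add: ac_mult)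
    also have "mul (Q j t0) q = Q j h" unfolding q_def using t0h by (simp add: pp_pp)
    finally show ?thesis using wh by simp
  qed
  have gq: "ac (g y0) q = 0"
  proof -
    have "g (ac y0 q) = ac (g y0) q" using g y0N unfolding gp_def q_def by (metis ia_pp)
    then show ?thesis using y0q gp_0[OF N g] by simp
  qed
  have "ac v (mul c' q) = 0" using ac_mult[of v c' q] vC iac' gq vc' by (simp add: q_def)
  then have cq: "\<forall>t<h. mul c' q (i,t) = 0" using ann[of "mul c' q"] by simp
  have sc': "starts n i c'" unfolding c'_def by (intro starts_mult starts_pp)
  have ec': "ends n (j+t0) c'"
    unfolding c'_def using ends_mult[OF ends_pp[of "j+t0" 0]] by simp
  have lc': "low t0 c'"
    unfolding low_def
  proof (intro allI impI)
    fix j' t' assume t': "t' < t0"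
    show "c' (j',t') = 0"
    proof (rule ccontr)
      assume nz: "c' (j',t') \<noteq> 0"
      then have j': "j' = i" using sc' i_lt by (auto simp: starts_def)
      have en: "(i + t') mod n = (j + t0) mod n" using nz ec' j' by (auto simp: ends_def)
      define t where "t = t' + (h - t0)"
      have tl: "t < h" using t' t0h by (simp add: t_def)
      have "mul c' q (i,t) = c' (i, t')"
        unfolding q_def pp_right using i_lt tl h_le en by (auto simp: t_def)
      then show False using cq tl nz j' by simp
    qed
  qed
  obtain a' where a': "ia a'" "c' = mul a' (Q j t0)" using rdiv[OF iac' ec' lc'] by auto
  define z where "z = ac v (mul a' (Q j 0))"
  have zA: "z \<in> vA v" unfolding z_def by (rule vA_in) simp
  have zC: "z \<in> C" using zA vA_sub[OF vC] by auto
  have zt0: "ac z (Q j t0) = g y0"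
  proof -
    have "ac z (Q j t0) = ac v (mul (mul a' (Q j 0)) (Q j t0))" unfolding z_def using vC a' by (simp add: ac_mult)
    also have "mul (mul a' (Q j 0)) (Q j t0) = c'" using a' by (simp add: mult_assoc pp_pp)
    finally show ?thesis using vc' by simp
  qed
  have ze: "ac z (Q j 0) = z"
  proof -
    have "ac z (Q j 0) = ac v (mul (mul a' (Q j 0)) (Q j 0))" unfolding z_def using vC a' by (simp add: ac_mult)
    also have "mul (mul a' (Q j 0)) (Q j 0) = mul a' (Q j 0)" by (simp add: mult_assoc pp_pp)
    finally show ?thesis by (simp add: z_def)
  qed
  have "\<forall>b. ia b \<longrightarrow> ac w b \<in> N \<longrightarrow> g (ac w b) = ac z b"
  proof (intro allI impI)
    fix b assume b: "ia b" and wb: "ac w b \<in> N"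
    have bl: "\<forall>t<t0. b (j,t) = 0"
    proof (rule ccontr)
      assume "\<not> (\<forall>t<t0. b (j,t) = 0)"
      then obtain t where t: "t < t0" "b (j,t) \<noteq> 0" by auto
      then obtain t1 where t1: "t1 \<le> t" "b (j,t1) \<noteq> 0" "\<forall>s<t1. b (j,s) = 0" using least_nz by blast
      have "ac w (Q j t1) \<in> N" using U_lemma[OF N wC j we b wb t1(3) t1(2)] .
      then have "t0 \<le> t1" unfolding t0_def by (rule Least_le)
      then show False using t t1 by simp
    qed
    define b1 where "b1 = mul (Q j 0) b"
    have sb1: "starts n j b1" unfolding b1_def by (intro starts_mult starts_pp)
    have lb1: "low t0 b1" unfolding low_def b1_def using e_left[OF b, of j] j bl by auto
    obtain b' where b': "ia b'" "b1 = mul (Q j t0) b'" using ldiv[OF _ sb1 lb1] by (auto simp: b1_def)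
    have wb1: "ac w b = ac y0 b'"
    proof -
      have "ac w b = ac w b1" using ac_mult[of w "Q j 0" b] b wC we by (simp add: b1_def)
      also have "\<dots> = ac y0 b'" using b' ac_mult[of w "Q j t0" b'] wC by (simp add: y0_def)
      finally show ?thesis .
    qed
    have "ac z b = ac z b1" using ac_mult[of z "Q j 0" b] b zC ze by (simp add: b1_def)
    also have "\<dots> = ac (g y0) b'" using b' ac_mult[of z "Q j t0" b'] zC zt0 by simp
    also have "\<dots> = g (ac y0 b')" using g y0N b'(1) by (auto simp: gp_def)
    finally show "g (ac w b) = ac z b" using wb1 by simp
  qed
  then show ?thesis using zA by blast
qed


lemma extend:
  assumes N: "submodule n k N M" and vN: "vA v \<subseteq> N" and g: "gp v N g" and w: "homog w j"
  shows "\<exists>N' g'. submodule n k N' M \<and> N \<subseteq> N' \<and> w \<in> N' \<and> gp v N' g'"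
proof -
  have wC: "w \<in> C" and j: "j < n" and we: "ac w (Q j 0) = w" using w by (auto simp: homog_def)
  obtain z where zA: "z \<in> vA v" and zb: "\<And>b. ia b \<Longrightarrow> ac w b \<in> N \<Longrightarrow> g (ac w b) = ac z b"
    using baer_step[OF N g w] by blast
  have zC: "z \<in> C" using zA vA_sub[OF vC] by auto
  have NC: "N \<subseteq> C" using sub_facts(1)[OF N] .
  have gA: "\<And>y. y \<in> N \<Longrightarrow> g y \<in> vA v" using g by (auto simp: gp_def)
  have gadd: "\<And>y1 y2. y1 \<in> N \<Longrightarrow> y2 \<in> N \<Longrightarrow> g (y1 + y2) = g y1 + g y2" using g by (auto simp: gp_def)
  have ghom: "\<And>y a. y \<in> N \<Longrightarrow> ia a \<Longrightarrow> g (ac y a) = ac (g y) a" using g by (auto simp: gp_def)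
  have gv: "\<And>a. ia a \<Longrightarrow> g (ac v a) = ac v a" using g by (auto simp: gp_def)
  define N' where "N' = {y + ac w b | y b. y \<in> N \<and> ia b}"
  have WD: "g y1 + ac z b1 = g y2 + ac z b2"
    if y: "y1 \<in> N" "y2 \<in> N" and b: "ia b1" "ia b2" and eq: "y1 + ac w b1 = y2 + ac w b2" for y1 y2 b1 b2
  proof -
    have "ac w (b1 - b2) = y2 - y1" using eq wC b by (simp add: ac_diff_a algebra_simps)
    then have in1: "ac w (b1 - b2) \<in> N" using sub_diff[OF N y(2) y(1)] by simp
    have "g (ac w (b1 - b2)) = ac z (b1 - b2)" using zb[OF _ in1] b by simp
    also have "\<dots> = ac z b1 - ac z b2" using zC b by (simp add: ac_diff_a)
    finally have "g (y2 - y1) = ac z b1 - ac z b2" using \<open>ac w (b1 - b2) = y2 - y1\<close> by simp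
    then have "g y2 - g y1 = ac z b1 - ac z b2" using gp_diff[OF N g y(2) y(1)] by simp
    then show ?thesis by (simp add: algebra_simps)
  qed
  define g' where "g' y' = (let p = (SOME p. fst p \<in> N \<and> ia (snd p) \<and> y' = fst p + ac w (snd p))
                           in g (fst p) + ac z (snd p))" for y'
  have g'_eq: "g' (y + ac w b) = g y + ac z b" if y: "y \<in> N" and b: "ia b" for y b
  proof -
    define p where "p = (SOME p. fst p \<in> N \<and> ia (snd p) \<and> y + ac w b = fst p + ac w (snd p))"
    have "fst p \<in> N \<and> ia (snd p) \<and> y + ac w b = fst p + ac w (snd p)"
      unfolding p_def by (rule someI[of _ "(y,b)"]) (use y b in simp)
    then have "g (fst p) + ac z (snd p) = g y + ac z b" using WD[OF _ y _ b] by metis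
    then show ?thesis by (simp add: g'_def p_def Let_def)
  qed
  have N'C: "N' \<subseteq> C" unfolding N'_def using NC wC by auto
  have NN': "N \<subseteq> N'"
  proof
    fix y assume "y \<in> N"
    then have "y = y + ac w 0" "ia (0::'a alg)" using wC by simp_all
    then show "y \<in> N'" using \<open>y \<in> N\<close> unfolding N'_def by blast
  qed
  have wN': "w \<in> N'"
  proof -
    have "w = 0 + ac w (Q j 0)" using we by simp
    then show ?thesis unfolding N'_def using sub_facts(2)[OF N] by fastforce
  qed
  have subN': "submodule n k N' M"
    unfolding submodule_def
  proof (intro conjI ballI allI impI)
    show "N' \<subseteq> C" by (rule N'C)
    show "0 \<in> N'" using NN' sub_facts(2)[OF N] by auto
  next
    fix u w' assume "u \<in> N'" "w' \<in> N'"
    then obtain y1 b1 y2 b2 where "u = y1 + ac w b1" "w' = y2 + ac w b2" "y1 \<in> N" "y2 \<in> N" "ia b1" "ia b2"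
      unfolding N'_def by blast
    moreover have "(y1 + ac w b1) + (y2 + ac w b2) = (y1 + y2) + ac w (b1 + b2)"
      using wC \<open>ia b1\<close> \<open>ia b2\<close> by (simp add: ac_add_a algebra_simps)
    ultimately show "u + w' \<in> N'" unfolding N'_def using sub_facts(3)[OF N] by fastforce
  next
    fix u assume "u \<in> N'"
    then obtain y1 b1 where "u = y1 + ac w b1" "y1 \<in> N" "ia b1" unfolding N'_def by blast
    moreover have "- (y1 + ac w b1) = (- y1) + ac w (- b1)"
      using wC \<open>ia b1\<close> by (simp add: ac_uminus_a)
    ultimately show "- u \<in> N'" unfolding N'_def using sub_facts(4)[OF N] by fastforce
  next
    fix u and a :: "'a alg" assume "u \<in> N'" "ia a"
    then obtain y1 b1 where "u = y1 + ac w b1" "y1 \<in> N" "ia b1" unfolding N'_def by blast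
    moreover have "ac (y1 + ac w b1) a = ac y1 a + ac w (mul b1 a)"
      using wC \<open>ia b1\<close> \<open>ia a\<close> \<open>y1 \<in> N\<close> NC by (auto simp: ac_add_v ac_mult)
    ultimately show "ac u a \<in> N'" unfolding N'_def using sub_facts(5)[OF N] \<open>ia a\<close> by fastforce
  qed
  have gpN': "gp v N' g'"
    unfolding gp_def
  proof (intro conjI ballI allI impI)
    fix y' assume "y' \<in> N'"
    then obtain y b where yb: "y' = y + ac w b" "y \<in> N" "ia b" unfolding N'_def by blast
    have "ac z b \<in> vA v" using vA_ac[OF vC zA yb(3)] .
    then show "g' y' \<in> vA v" using yb g'_eq gA vA_add[OF vC] by simp
  next
    fix y1' y2' assume "y1' \<in> N'" "y2' \<in> N'"
    then obtain y1 b1 y2 b2 where yb: "y1' = y1 + ac w b1" "y2' = y2 + ac w b2" "y1 \<in> N" "y2 \<in> N" "ia b1" "ia b2"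
      unfolding N'_def by blast
    have e: "y1' + y2' = (y1 + y2) + ac w (b1 + b2)" using yb wC by (simp add: ac_add_a algebra_simps)
    have "g' ((y1 + y2) + ac w (b1 + b2)) = g (y1 + y2) + ac z (b1 + b2)"
      using g'_eq sub_facts(3)[OF N] yb by simp
    then have "g' (y1' + y2') = g (y1 + y2) + ac z (b1 + b2)" by (simp only: e)
    also have "\<dots> = (g y1 + ac z b1) + (g y2 + ac z b2)"
      using gadd yb zC by (simp add: ac_add_a algebra_simps)
    finally show "g' (y1' + y2') = g' y1' + g' y2'" using yb g'_eq by simp
  next
    fix y' and a :: "'a alg" assume "y' \<in> N'" "ia a"
    then obtain y b where yb: "y' = y + ac w b" "y \<in> N" "ia b" unfolding N'_def by blast
    have yC: "y \<in> C" using yb NC by auto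
    have "ac y' a = ac y a + ac w (mul b a)" using yb wC yC \<open>ia a\<close> by (simp add: ac_add_v ac_mult)
    then have "g' (ac y' a) = g (ac y a) + ac z (mul b a)"
      using g'_eq sub_facts(5)[OF N] yb \<open>ia a\<close> by simp
    also have "\<dots> = ac (g y) a + ac (ac z b) a" using ghom yb \<open>ia a\<close> zC by (simp add: ac_mult)
    also have "\<dots> = ac (g y + ac z b) a"
      using gA[OF yb(2)] vA_sub[OF vC] zC yb \<open>ia a\<close> by (auto simp: ac_add_v)
    finally show "g' (ac y' a) = ac (g' y') a" using yb g'_eq by simp
  next
    fix a :: "'a alg" assume "ia a"
    have "ac v a \<in> N" using vN vA_in[OF \<open>ia a\<close>] by auto
    then have "g' (ac v a + ac w 0) = g (ac v a) + ac z 0" using g'_eq by simp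
    then show "g' (ac v a) = ac v a" using wC zC gv[OF \<open>ia a\<close>] by simp
  qed
  show ?thesis using subN' NN' wN' gpN' by blast
qed

lemma ext_fin:
  assumes "finite T" "\<And>w. w \<in> T \<Longrightarrow> \<exists>j. homog w j"
  shows "\<exists>N g. submodule n k N M \<and> vA v \<subseteq> N \<and> T \<subseteq> N \<and> gp v N g"
  using assms
proof (induction T rule: finite_induct)
  case empty
  have "gp v (vA v) (\<lambda>x. x)" unfolding gp_def using vA_ac[OF vC] by auto
  then show ?case using vA_submodule[OF vC] by blast
next
  case (insert w T)
  then obtain N g where Ng: "submodule n k N M" "vA v \<subseteq> N" "T \<subseteq> N" "gp v N g" by auto
  obtain j where "homog w j" using insert.prems by blast
  then obtain N' g' where "submodule n k N' M" "N \<subseteq> N'" "w \<in> N'" "gp v N' g'"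
    using extend[OF Ng(1,2,4)] by blast
  then show ?case using Ng by blast
qed

theorem cyclic:
  assumes fg: "fingen n k M" and ind: "indecomposable n k M"
  shows "C = vA v"
proof -
  obtain S where S: "finite S" "S \<subseteq> C" "\<And>U. submodule n k U M \<Longrightarrow> S \<subseteq> U \<Longrightarrow> U = C"
    using fg unfolding fingen_def by blast
  define T where "T = (\<lambda>(s,j). ac s (Q j 0)) ` (S \<times> {..<n})"
  have fT: "finite T" unfolding T_def using S(1) by simp
  have hT: "\<And>w. w \<in> T \<Longrightarrow> \<exists>j. homog w j" unfolding T_def using S(2) homog_P by auto
  obtain N g where Ng: "submodule n k N M" "vA v \<subseteq> N" "T \<subseteq> N" "gp v N g"
    using ext_fin[OF fT hT] by blast
  have "S \<subseteq> N"
  proof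
    fix s assume s: "s \<in> S"
    then have sC: "s \<in> C" using S(2) by auto
    have "s = (\<Sum>j<n. ac s (Q j 0))"
      using ac_one[OF sC] ac_sum_a[OF sC, of "{..<n}" "\<lambda>j. Q j 0"] by (simp add: one_sum)
    moreover have "(\<Sum>j<n. ac s (Q j 0)) \<in> N"
      using Ng(3) s by (intro sub_sum[OF Ng(1)]) (auto simp: T_def)
    ultimately show "s \<in> N" by simp
  qed
  then have NC: "N = C" using S(3)[OF Ng(1)] by simp
  have gA: "\<And>y. y \<in> C \<Longrightarrow> g y \<in> vA v" using Ng(4) NC by (auto simp: gp_def)
  have gg: "\<And>y. y \<in> C \<Longrightarrow> g (g y) = g y"
  proof -
    fix y assume "y \<in> C"
    then obtain c where "ia c" "g y = ac v c" using gA by (auto simp: vA_def)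
    then show "g (g y) = g y" using Ng(4) by (auto simp: gp_def)
  qed
  define W where "W = {x \<in> C. g x = 0}"
  have g0: "g 0 = 0" using gp_0[OF Ng(1,4)] .
  have subW: "submodule n k W M"
    unfolding submodule_def W_def
  proof (intro conjI ballI allI impI)
    show "{x \<in> C. g x = 0} \<subseteq> C" by auto
    show "0 \<in> {x \<in> C. g x = 0}" using g0 by simp
  next
    fix u w assume "u \<in> {x \<in> C. g x = 0}" "w \<in> {x \<in> C. g x = 0}"
    then show "u + w \<in> {x \<in> C. g x = 0}" using Ng(4) NC by (auto simp: gp_def)
  next
    fix u assume u: "u \<in> {x \<in> C. g x = 0}"
    then have "g (0 - u) = g 0 - g u" using gp_diff[OF Ng(1,4), of 0 u] NC sub_facts(2)[OF Ng(1)] by auto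
    then have "g (- u) = 0" using u g0 by simp
    then show "- u \<in> {x \<in> C. g x = 0}" using u by simp
  next
    fix u and a :: "'a alg" assume u: "u \<in> {x \<in> C. g x = 0}" and a: "ia a"
    then have "g (ac u a) = ac (g u) a" using Ng(4) NC by (auto simp: gp_def)
    then show "ac u a \<in> {x \<in> C. g x = 0}" using u a by simp
  qed
  have inter: "vA v \<inter> W = {0}"
  proof
    show "vA v \<inter> W \<subseteq> {0}"
    proof
      fix x assume "x \<in> vA v \<inter> W"
      then obtain c where "ia c" "x = ac v c" "g x = 0" by (auto simp: vA_def W_def)
      then show "x \<in> {0}" using Ng(4) by (auto simp: gp_def)
    qed
    show "{0} \<subseteq> vA v \<inter> W" using sub_facts(2)[OF vA_submodule[OF vC]] sub_facts(2)[OF subW] by auto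
  qed
  have dec: "\<And>x. x \<in> C \<Longrightarrow> x - g x \<in> W"
  proof -
    fix x assume x: "x \<in> C"
    have gxC: "g x \<in> C" using gA[OF x] vA_sub[OF vC] by auto
    have "g (x - g x) = g x - g (g x)" using gp_diff[OF Ng(1,4)] NC x gxC by auto
    then show "x - g x \<in> W" using gg[OF x] x gxC by (simp add: W_def)
  qed
  have sums: "setsum (vA v) W = C"
  proof
    show "setsum (vA v) W \<subseteq> C" unfolding setsum_def W_def using vA_sub[OF vC] by auto
    show "C \<subseteq> setsum (vA v) W"
    proof
      fix x assume x: "x \<in> C"
      have "x = g x + (x - g x)" by simp
      then show "x \<in> setsum (vA v) W" unfolding setsum_def using gA[OF x] dec[OF x] by blast
    qed
  qed
  have "vA v = {0} \<or> W = {0}"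
    using ind vA_submodule[OF vC] subW inter sums unfolding indecomposable_def by blast
  moreover have "vA v \<noteq> {0}"
  proof
    assume "vA v = {0}"
    moreover have "v \<in> vA v" using vA_in[of "Q i 0" v] ve by simp
    ultimately show False using v_nz by simp
  qed
  ultimately have W0: "W = {0}" by simp
  show ?thesis
  proof
    show "C \<subseteq> vA v"
    proof
      fix x assume x: "x \<in> C"
      then have "x - g x = 0" using dec[OF x] W0 by simp
      then show "x \<in> vA v" using gA[OF x] by simp
    qed
    show "vA v \<subseteq> C" by (rule vA_sub[OF vC])
  qed
qed

end


lemma least_nz_g:
  fixes f :: "nat \<Rightarrow> 'b::zero"
  assumes "f t \<noteq> 0"
  shows "\<exists>t1\<le>t. f t1 \<noteq> 0 \<and> (\<forall>s<t1. f s = 0)"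
proof -
  define t1 where "t1 = (LEAST t. f t \<noteq> 0)"
  have "f t1 \<noteq> 0" using assms unfolding t1_def by (metis (mono_tags, lifting) LeastI)
  moreover have "t1 \<le> t" using assms unfolding t1_def by (metis (mono_tags, lifting) Least_le)
  moreover have "\<forall>s<t1. f s = 0" unfolding t1_def using not_less_Least by blast
  ultimately show ?thesis by blast
qed

context bmod begin

lemma exists_max:
  assumes "C \<noteq> {0}"
  shows "\<exists>v i. bmax n k M v i (ht i v)"
proof -
  define HS where "HS = {ht j w | w j. homog w j \<and> w \<noteq> 0}"
  have fin: "finite HS"
  proof (rule finite_subset)
    show "HS \<subseteq> {..n*k+1}" unfolding HS_def using ht_le by auto
  qed simp
  obtain w where w: "w \<in> C" "w \<noteq> 0" using assms zero_in by blast
  obtain j where j: "j < n" "ac w (Q j 0) \<noteq> 0" using nonzero_homog[OF w] by blast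
  have "ht j (ac w (Q j 0)) \<in> HS" unfolding HS_def using homog_P[OF w(1) j(1)] j(2) by blast
  then have ne: "HS \<noteq> {}" by blast
  have "Max HS \<in> HS" using Max_in[OF fin ne] .
  then obtain v i where vi0: "homog v i" "v \<noteq> 0" "Max HS = ht i v" unfolding HS_def by auto
  then have vi: "homog v i" "v \<noteq> 0" "ht i v = Max HS" by auto
  have hm: "ac w (Q j (ht i v)) = 0" if "homog w j" for w j
  proof (cases "w = 0")
    case True then show ?thesis by simp
  next
    case False
    then have "ht j w \<in> HS" unfolding HS_def using that by blast
    then have "ht j w \<le> ht i v" using vi(3) Max_ge[OF fin] by simp
    then show ?thesis using ht_above[OF that] by simp
  qed
  have "bmax n k M v i (ht i v)"
    by unfold_locales (use vi hm in auto)
  then show ?thesis by blast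
qed

lemma free_act: "act (free_mod n k m) z b = (\<lambda>j. mul (z j) b)"
  by (simp add: free_mod_def act_def)
lemma free_carr: "carr (free_mod n k m) = {x. (\<forall>j<m. ia (x j)) \<and> (\<forall>j\<ge>m. x j = 0)}"
  by (simp add: free_mod_def carr_def)

lemma cyc_proj:
  assumes x: "homog x i" and gen: "C = vA x"
    and free: "\<And>a. ia a \<Longrightarrow> ac x a = 0 \<Longrightarrow> mul (Q i 0) a = 0"
  shows "fg_projective n k M"
proof -
  have xC: "x \<in> C" and i: "i < n" and xe: "ac x (Q i 0) = x" using x by (auto simp: homog_def)
  have fg: "fingen n k M"
    unfolding fingen_def
  proof (intro exI[of _ "{x}"] conjI allI impI)
    show "finite {x}" "{x} \<subseteq> C" using xC by auto
    fix U assume U: "submodule n k U M" "{x} \<subseteq> U"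
    show "U = C"
    proof
      show "U \<subseteq> C" using sub_facts(1)[OF U(1)] .
      show "C \<subseteq> U" using gen U sub_facts(5)[OF U(1)] by (auto simp: vA_def)
    qed
  qed
  have wd: "mul (Q i 0) a = mul (Q i 0) b" if "ia a" "ia b" "ac x a = ac x b" for a b
  proof -
    have "ac x (a - b) = 0" using that xC by (simp add: ac_diff_a)
    then have "mul (Q i 0) (a - b) = 0" using free that by simp
    then show ?thesis by (simp add: mult_diff_right)
  qed
  have split: "\<exists>s. rhom n k M (free_mod n k m) s \<and> (\<forall>y\<in>C. g (s y) = y)"
    if g: "rhom n k (free_mod n k m) M g" and sur: "g ` carr (free_mod n k m) = C" for m g
  proof -
    obtain z where z: "z \<in> carr (free_mod n k m)" "g z = x" using sur xC by force
    define s where "s y = (\<lambda>j. mul (z j) (mul (Q i 0) (SOME a. ia a \<and> y = ac x a)))" for y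
    have s_eq: "s (ac x a) = (\<lambda>j. mul (z j) (mul (Q i 0) a))" if a: "ia a" for a
    proof -
      define a0 where "a0 = (SOME b. ia b \<and> ac x a = ac x b)"
      have a0: "ia a0 \<and> ac x a = ac x a0" unfolding a0_def by (rule someI[of _ a]) (use a in simp)
      then have "mul (Q i 0) a0 = mul (Q i 0) a" using wd[of a0 a] a by simp
      then show ?thesis by (simp add: s_def a0_def)
    qed
    have getc: "\<exists>a. ia a \<and> y = ac x a" if "y \<in> C" for y using that gen by (auto simp: vA_def)
    have zc: "\<forall>j<m. ia (z j)" "\<forall>j\<ge>m. z j = 0" using z(1) by (auto simp: free_carr)
    have rh: "rhom n k M (free_mod n k m) s"
      unfolding rhom_def
    proof (intro conjI ballI allI impI)
      fix y assume "y \<in> C"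
      then obtain a where a: "ia a" "y = ac x a" using getc by blast
      show "s y \<in> carr (free_mod n k m)" using a zc by (auto simp: free_carr s_eq)
    next
      fix y1 y2 assume "y1 \<in> C" "y2 \<in> C"
      then obtain a1 a2 where a: "ia a1" "y1 = ac x a1" "ia a2" "y2 = ac x a2" using getc by blast
      have "y1 + y2 = ac x (a1 + a2)" using a xC by (simp add: ac_add_a)
      then show "s (y1 + y2) = s y1 + s y2" using a by (simp add: s_eq fun_eq_iff mult_add_right)
    next
      fix y and a :: "'a alg" assume "y \<in> C" "ia a"
      then obtain a1 where a1: "ia a1" "y = ac x a1" using getc by blast
      have "ac y a = ac x (mul a1 a)" using a1 xC \<open>ia a\<close> by (simp add: ac_mult)
      then show "s (ac y a) = act (free_mod n k m) (s y) a"
        using a1 by (simp add: s_eq free_act mult_assoc)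
    qed
    have "\<forall>y\<in>C. g (s y) = y"
    proof
      fix y assume "y \<in> C"
      then obtain a where a: "ia a" "y = ac x a" using getc by blast
      have "s y = act (free_mod n k m) z (mul (Q i 0) a)" using a by (simp add: s_eq free_act)
      then have "g (s y) = ac (g z) (mul (Q i 0) a)" using g z(1) by (simp add: rhom_def)
      also have "\<dots> = ac x a" using z(2) xC a xe by (simp add: ac_mult)
      finally show "g (s y) = y" using a by simp
    qed
    then show ?thesis using rh by blast
  qed
  show ?thesis unfolding fg_projective_def using rm fg split by blast
qed

lemma proj_free:
  assumes pr: "fg_projective n k M" and x: "homog x i" and xnz: "x \<noteq> 0" and gen: "C = vA x"
    and a: "ia a" and xa: "ac x a = 0"
  shows "mul (Q i 0) a = 0"
proof -
  have xC: "x \<in> C" and i: "i < n" and xe: "ac x (Q i 0) = x" using x by (auto simp: homog_def)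
  define g where "g z = ac x (z (0::nat))" for z :: "'a fvec"
  have gh: "rhom n k (free_mod n k 1) M g"
    unfolding rhom_def g_def
    by (auto simp: free_carr free_act xC ac_add_a ac_mult)
  have gs: "g ` carr (free_mod n k 1) = C"
  proof
    show "g ` carr (free_mod n k 1) \<subseteq> C" using gh by (auto simp: rhom_def)
    show "C \<subseteq> g ` carr (free_mod n k 1)"
    proof
      fix y assume "y \<in> C"
      then obtain c where c: "ia c" "y = ac x c" using gen by (auto simp: vA_def)
      define zz where "zz = (\<lambda>j::nat. if j = 0 then c else 0)"
      have "zz \<in> carr (free_mod n k 1)" using c by (auto simp: free_carr zz_def)
      moreover have "g zz = y" using c by (simp add: g_def zz_def)
      ultimately show "y \<in> g ` carr (free_mod n k 1)" by blast
    qed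
  qed
  obtain s where s: "rhom n k M (free_mod n k 1) s" "\<And>y. y \<in> C \<Longrightarrow> g (s y) = y"
    using pr gh gs unfolding fg_projective_def by blast
  define b where "b = s x 0"
  have sxc: "s x \<in> carr (free_mod n k 1)" using s(1) xC by (simp add: rhom_def)
  then have iab: "ia b" by (simp add: free_carr b_def)
  have xb: "ac x b = x" using s(2)[OF xC] by (simp add: g_def b_def)
  have bnz: "b (i,0) \<noteq> 0"
  proof
    assume b0: "b (i,0) = 0"
    define r where "r = mul (Q i 0) b"
    have iar: "ia r" by (simp add: r_def)
    have xr: "ac x r = x" using xb xe xC iab by (simp add: r_def ac_mult)
    have lr: "low 1 r" unfolding low_def r_def using e_left[OF iab, of i] i b0 by auto
    have "\<exists>r'. ia r' \<and> low m r' \<and> ac x r' = x" for m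
    proof (induction m)
      case 0 then show ?case using ac_one[OF xC] by (intro exI[of _ "alg_one n k"]) (simp add: low_def)
    next
      case (Suc m)
      then obtain r' where r': "ia r'" "low m r'" "ac x r' = x" by blast
      have "ac x (mul r r') = x" using ac_mult[OF xC iar r'(1)] xr r'(3) by simp
      moreover have "low (1 + m) (mul r r')" by (rule low_mult[OF lr r'(2)])
      ultimately show ?case using r' by (intro exI[of _ "mul r r'"]) simp
    qed
    then obtain r' where r': "ia r'" "low (n*k+1) r'" "ac x r' = x" by blast
    then have "r' = 0" using low_big by blast
    then show False using r' xnz xC by simp
  qed
  show ?thesis
  proof (rule ccontr)
    assume nz: "mul (Q i 0) a \<noteq> 0"
    define a1 where "a1 = mul (Q i 0) a"
    have a1e: "a1 = (\<lambda>(j,l). if j = i then a (j,l) else 0)" using e_left[OF a, of i] i by (simp add: a1_def)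
    obtain j t where jt: "a1 (j,t) \<noteq> 0" using nz by (auto simp: a1_def fun_eq_iff)
    then have jt': "j = i" "a (i,t) \<noteq> 0" by (auto simp: a1e split: if_splits)
    then obtain t0 where t0: "a (i,t0) \<noteq> 0" "\<forall>s<t0. a (i,s) = 0"
      using least_nz_g[of "\<lambda>t. a (i,t)" t] by blast
    have t0le: "t0 \<le> n*k" using t0(1) a i by (auto simp: is_alg_iff)
    have "ac x a1 = 0" using xa xe xC a by (simp add: a1_def ac_mult)
    then have "s (ac x a1) = s 0" by simp
    moreover have "s 0 = 0"
    proof -
      have "s (0 + 0) = s 0 + s 0" using s(1) zero_in unfolding rhom_def by blast
      then show ?thesis by simp
    qed
    moreover have "s (ac x a1) = act (free_mod n k 1) (s x) a1" using s(1) xC by (simp add: rhom_def a1_def)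
    ultimately have "mul b a1 = 0" by (simp add: free_act b_def fun_eq_iff)
    then have "mul b a1 (i,t0) = 0" by simp
    moreover have "mul b a1 (i,t0) = b (i,0) * a (i,t0)"
    proof -
      have "mul b a1 (i,t0) = (\<Sum>l1\<in>{0..t0}. b (i, l1) * a1 ((i + l1) mod n, t0 - l1))"
        using i t0le by (simp add: alg_mult_apply)
      also have "\<dots> = (\<Sum>l1\<in>{0..t0}. if l1 = 0 then b (i,0) * a (i,t0) else 0)"
      proof (rule sum.cong[OF refl])
        fix l1 assume "l1 \<in> {0..t0}"
        show "b (i, l1) * a1 ((i + l1) mod n, t0 - l1) = (if l1 = 0 then b (i,0) * a (i,t0) else 0)"
        proof (cases "l1 = 0")
          case True then show ?thesis using i by (simp add: a1e)
        next
          case False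
          then have "t0 - l1 < t0" using \<open>l1 \<in> {0..t0}\<close> by auto
          then show ?thesis using False t0(2) by (simp add: a1e)
        qed
      qed
      also have "\<dots> = b (i,0) * a (i,t0)" by simp
      finally show ?thesis .
    qed
    ultimately show False using bnz t0(1) by simp
  qed
qed

end


locale bcyc = bmax n k M v i h for n k :: nat and M :: "('m::ab_group_add, 'a::field) rmod" and v i h +
  assumes gen: "C = vA v"
begin

definition uU where "uU U = (LEAST t. ac v (Q i t) \<in> U)"

lemma vh: "ac v (Q i h) = 0" using ht_zero[OF v_hom] h_def by simp

lemma uU_in: "submodule n k U M \<Longrightarrow> ac v (Q i (uU U)) \<in> U"
  unfolding uU_def by (rule LeastI[of _ h]) (use vh sub_facts(2) in simp)

lemma uU_le: "submodule n k U M \<Longrightarrow> uU U \<le> h"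
  unfolding uU_def by (rule Least_le) (use vh sub_facts(2) in simp)

lemma sub_char:
  assumes U: "submodule n k U M"
  shows "U = vA (ac v (Q i (uU U)))"
proof
  define u where "u = uU U"
  have uin: "ac v (Q i u) \<in> U" using uU_in[OF U] by (simp add: u_def)
  have uC: "ac v (Q i u) \<in> C" using vC by simp
  show "vA (ac v (Q i (uU U))) \<subseteq> U" using uin sub_facts(5)[OF U] by (auto simp: vA_def u_def)
  show "U \<subseteq> vA (ac v (Q i (uU U)))"
  proof
    fix y assume yU: "y \<in> U"
    then have "y \<in> C" using sub_facts(1)[OF U] by auto
    then obtain a where a: "ia a" "y = ac v a" using gen by (auto simp: vA_def)
    show "y \<in> vA (ac v (Q i (uU U)))"
    proof (cases "\<forall>t<u. a (i,t) = 0")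
      case True
      define a1 where "a1 = mul (Q i 0) a"
      have s1: "starts n i a1" unfolding a1_def by (intro starts_mult starts_pp)
      have l1: "low u a1" unfolding low_def a1_def using e_left[OF a(1), of i] i_lt True by auto
      obtain a' where a': "ia a'" "a1 = mul (Q i u) a'" using ldiv[OF _ s1 l1] by (auto simp: a1_def)
      have "y = ac v a1" using a ve vC by (simp add: a1_def ac_mult)
      also have "\<dots> = ac (ac v (Q i u)) a'" using a' vC by (simp add: ac_mult)
      finally show ?thesis using a'(1) by (auto simp: vA_def u_def)
    next
      case False
      then obtain t where t: "t < u" "a (i,t) \<noteq> 0" by auto
      then obtain t1 where t1: "t1 \<le> t" "a (i,t1) \<noteq> 0" "\<forall>s<t1. a (i,s) = 0"
        using least_nz_g[of "\<lambda>t. a (i,t)" t] by blast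
      have "ac v (Q i t1) \<in> U" using U_lemma[OF U vC i_lt ve a(1) _ t1(3) t1(2)] yU a(2) by simp
      then have "u \<le> t1" unfolding u_def uU_def by (rule Least_le)
      then show ?thesis using t t1 by simp
    qed
  qed
qed

lemma chain_h: "has_chain n k M h"
  unfolding has_chain_def
proof (intro exI[of _ "\<lambda>j. vA (ac v (Q i (h - j)))"] conjI allI impI)
  show "vA (ac v (Q i (h - 0))) = {0}"
  proof
    show "vA (ac v (Q i (h - 0))) \<subseteq> {0}" using vh by (auto simp: vA_def)
    have "ac (ac v (Q i (h - 0))) 0 = 0" using vC by simp
    then show "{0} \<subseteq> vA (ac v (Q i (h - 0)))" unfolding vA_def by (metis (mono_tags, lifting) ia_0 mem_Collect_eq singletonD subsetI)
  qed
  show "vA (ac v (Q i (h - h))) = C" using ve gen by simp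
  fix j
  show "j \<le> h \<Longrightarrow> submodule n k (vA (ac v (Q i (h - j)))) M" using vC by (simp add: vA_submodule)
  assume j: "j < h"
  define u where "u = ac v (Q i (h - Suc j))"
  have uC: "u \<in> C" using vC by (simp add: u_def)
  have hj: "h - j = (h - Suc j) + 1" using j by simp
  have split: "Q i (h - j) = mul (Q i (h - Suc j)) (Q (i + (h - Suc j)) 1)" by (simp only: pp_pp hj) simp
  have sub: "vA (ac v (Q i (h - j))) \<subseteq> vA u"
  proof
    fix y assume "y \<in> vA (ac v (Q i (h - j)))"
    then obtain a where a: "ia a" "y = ac (ac v (Q i (h - j))) a" by (auto simp: vA_def)
    have "ac v (Q i (h - j)) = ac u (Q (i + (h - Suc j)) 1)" using split vC by (simp add: u_def ac_mult)
    then have "y = ac u (mul (Q (i + (h - Suc j)) 1) a)" using a uC by (simp add: ac_mult)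
    then show "y \<in> vA u" by (auto simp: vA_def)
  qed
  have uin: "u \<in> vA u" using ac_e_pp[OF vC ve, of "h - Suc j"] vA_in[of "Q (i + (h - Suc j)) 0" u]
    by (simp add: u_def)
  have unot: "u \<notin> vA (ac v (Q i (h - j)))"
  proof
    assume "u \<in> vA (ac v (Q i (h - j)))"
    then obtain a where a: "ia a" "u = ac (ac v (Q i (h - j))) a" by (auto simp: vA_def)
    then have "ac v (Q i (h - Suc j) - mul (Q i (h - j)) a) = 0"
      using vC by (simp add: ac_diff_a ac_mult u_def)
    then have "\<forall>t<h. (Q i (h - Suc j) - mul (Q i (h - j)) a) (i,t) = (0::'a)"
      using ann[of "Q i (h - Suc j) - mul (Q i (h - j)) a"] a by simp
    then have "(Q i (h - Suc j) - mul (Q i (h - j)) a) (i, h - Suc j) = (0::'a)" using j by simp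
    moreover have "mul (Q i (h - j)) a (i, h - Suc j) = 0"
      using low_mult_l[OF low_pp[of "h - j" i], of a] j unfolding low_def by simp
    moreover have "Q i (h - Suc j) (i, h - Suc j) = 1" using h_le i_lt by (simp add: pp_def)
    ultimately show False by simp
  qed
  show "vA (ac v (Q i (h - j))) \<subset> vA (ac v (Q i (h - Suc j)))"
    using sub uin unot by (auto simp: u_def)
qed

lemma chain_le: assumes "has_chain n k M m" shows "m \<le> h"
proof -
  obtain c where c: "c 0 = {0}" "c m = C" "\<And>j. j \<le> m \<Longrightarrow> submodule n k (c j) M"
    "\<And>j. j < m \<Longrightarrow> c j \<subset> c (Suc j)"
    using assms unfolding has_chain_def by blast
  define u where "u j = uU (c j)" for j
  have dec: "u (Suc j) < u j" if j: "j < m" for j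
  proof -
    have S1: "submodule n k (c j) M" "submodule n k (c (Suc j)) M" using c(3) j by auto
    have "ac v (Q i (u j)) \<in> c (Suc j)" using uU_in[OF S1(1)] c(4)[OF j] by (auto simp: u_def)
    then have le: "u (Suc j) \<le> u j" unfolding u_def uU_def by (rule Least_le)
    have "u (Suc j) \<noteq> u j"
    proof
      assume "u (Suc j) = u j"
      then have "c (Suc j) = c j" using sub_char[OF S1(1)] sub_char[OF S1(2)] by (simp add: u_def)
      then show False using c(4)[OF j] by simp
    qed
    then show ?thesis using le by simp
  qed
  have "j \<le> m \<Longrightarrow> u j + j \<le> h" for j
  proof (induction j)
    case 0 then show ?case using uU_le c(3) by (simp add: u_def)
  next
    case (Suc j)
    then show ?case using dec[of j] by simp
  qed
  then have "u m + m \<le> h" by simp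
  then show ?thesis by simp
qed

lemma modlength_eq: "modlength n k M = h"
  unfolding modlength_def by (rule Greatest_equality) (use chain_h chain_le in auto)

lemma h_le_nk: assumes "\<not> fg_projective n k M" shows "h \<le> n*k"
proof (rule ccontr)
  assume "\<not> h \<le> n*k"
  then have hh: "h = n*k+1" using h_le by simp
  have "fg_projective n k M"
  proof (rule cyc_proj[OF v_hom gen])
    fix a :: "'a alg" assume a: "ia a" "ac v a = 0"
    then have z: "\<forall>t<h. a (i,t) = 0" using ann by simp
    show "mul (Q i 0) a = 0"
      unfolding e_left[OF a(1)]
    proof (rule ext, clarify)
      fix j l
      show "(if j = i mod n then a (j, l) else 0) = 0 (j,l)"
      proof (cases "j = i mod n")
        case True
        then have ji: "j = i" using i_lt by simp
        show ?thesis
        proof (cases "l < h")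
          case True then show ?thesis using z ji by simp
        next
          case False then have "\<not> l \<le> n*k" using hh by simp
          then show ?thesis using a(1) ji by (simp add: is_alg_iff)
        qed
      qed simp
    qed
  qed
  then show False using assms by simp
qed

end


definition Zm :: "('m::ab_group_add, 'k::field) rmod" where "Zm = ({0}, (\<lambda>_ _. 0))"

lemma Zm_carr[simp]: "carr Zm = {0}" by (simp add: Zm_def carr_def)
lemma Zm_act[simp]: "act Zm x a = 0" by (simp add: Zm_def act_def)

lemma Zm_rm: "rmodule n k (Zm :: ('m::ab_group_add, 'k::field) rmod)" by (simp add: rmodule_def)

lemma Zm_proj: "fg_projective n k (Zm :: ('m::ab_group_add, 'k::field) rmod)"
  unfolding fg_projective_def
proof (intro conjI allI impI)
  show "rmodule n k Zm" by (rule Zm_rm)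
  show "fingen n k Zm" unfolding fingen_def submodule_def by auto
  fix m and g :: "'k fvec \<Rightarrow> 'm" assume g: "rhom n k (free_mod n k m) Zm g" "g ` carr (free_mod n k m) = carr Zm"
  have z0: "(0::'k fvec) \<in> carr (free_mod n k m)"
    unfolding free_mod_def carr_def by (simp add: is_alg_def)
  have "g (0 + 0) = g 0 + g 0" using g(1) z0 unfolding rhom_def by blast
  then have g0: "g 0 = 0" by simp
  show "\<exists>s. rhom n k (Zm :: ('m, 'k) rmod) (free_mod n k m) s \<and> (\<forall>v\<in>carr (Zm :: ('m, 'k) rmod). g (s v) = v)"
  proof (intro exI[of _ "\<lambda>_. (0::'k fvec)"] conjI)
    have a0: "act (free_mod n k m) (0::'k fvec) a = 0" for a
      by (simp add: free_mod_def act_def alg_mult_def fun_eq_iff)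
    show "rhom n k (Zm :: ('m, 'k) rmod) (free_mod n k m) (\<lambda>_. (0::'k fvec))" unfolding rhom_def using z0 a0 by simp
    show "\<forall>v\<in>carr (Zm :: ('m, 'k) rmod). g 0 = v" using g0 by simp
  qed
qed

lemma rm_zero_act: "rmodule n k X \<Longrightarrow> is_alg n k a \<Longrightarrow> act X 0 a = 0"
proof -
  assume X: "rmodule n k X" and a: "is_alg n k a"
  have z: "0 \<in> carr X" using X by (simp add: rmodule_def)
  have "act X (0 + 0) a = act X 0 a + act X 0 a" using X a z unfolding rmodule_def by blast
  then show ?thesis by simp
qed

lemma zmap: assumes "rmodule n k Y" shows "rhom n k X Y (\<lambda>_. 0)"
proof -
  have "0 \<in> carr Y" using assms by (simp add: rmodule_def)
  then show ?thesis unfolding rhom_def using rm_zero_act[OF assms] by auto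
qed

lemma rhom_0: assumes "rhom n k X Y f" "0 \<in> carr X" shows "f 0 = 0"
proof -
  have "f (0 + 0) = f 0 + f 0" using assms unfolding rhom_def by blast
  then show ?thesis by simp
qed

lemma f_zero: assumes f: "rhom n k X Y f" and X: "rmodule n k X" and c: "carr X = {0} \<or> carr Y = {0}"
  and x: "x \<in> carr X" shows "f x = 0"
proof (cases "carr X = {0}")
  case True then show ?thesis using x rhom_0[OF f] by simp
next
  case False then have "carr Y = {0}" using c by simp
  then show ?thesis using f x by (auto simp: rhom_def)
qed

lemma cx_carr: "carr (pres_cx P1 P0 j) = (if j = 0 then carr P1 else if j = 1 then carr P0 else {0})"
  by (simp add: pres_cx_def carr_def)
lemma cx_eq: "pres_cx P1 P0 j = (if j = 0 then P1 else if j = 1 then P0 else Zm)"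
  by (simp add: pres_cx_def Zm_def)
lemma pd_eq: "pres_d d j = (if j = 0 then d else (\<lambda>_. 0))"
  by (simp add: pres_d_def)

lemma sgn1: "sgn_shift 1 x = - x" by (simp add: sgn_shift_def)
lemma sgnm1: "sgn_shift (-1) x = - x" by (simp add: sgn_shift_def)
lemma sgn0: "sgn_shift s (0::'m::ab_group_add) = 0" by (simp add: sgn_shift_def)

lemma tilting_crit:
  fixes P1 P0 :: "('m::ab_group_add, 'k::field) rmod"
  assumes p1: "fg_projective n k P1" and p0: "fg_projective n k P0" and d: "rhom n k P1 P0 d"
    and A: "\<And>f0. rhom n k P1 P0 f0 \<Longrightarrow> \<exists>h0. rhom n k P1 P1 h0 \<and> (\<forall>x\<in>carr P1. f0 x = - d (h0 x))"
    and B: "\<And>f1. rhom n k P0 P1 f1 \<Longrightarrow> (\<forall>x\<in>carr P0. d (f1 x) = 0) \<Longrightarrow> (\<forall>x\<in>carr P0. f1 x = 0)"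
  shows "partial_tilting n k (pres_cx P1 P0) (pres_d d)"
proof -
  have r1: "rmodule n k P1" and r0: "rmodule n k P0" using p1 p0 by (auto simp: fg_projective_def)
  have rmC: "rmodule n k (pres_cx P1 P0 j)" for j
    using r1 r0 Zm_rm[of n k] unfolding cx_eq by (cases "j = 0"; cases "j = 1") auto
  have z1: "0 \<in> carr P1" and z0: "0 \<in> carr P0" using r1 r0 by (auto simp: rmodule_def)
  have d0: "d 0 = 0" using rhom_0[OF d z1] .
  have D0: "pres_d d j 0 = 0" for j using d0 by (simp add: pd_eq)
  have zc: "0 \<in> carr (pres_cx P1 P0 j)" for j using z1 z0 by (simp add: cx_carr)
  have pc: "proj_complex n k (pres_cx P1 P0) (pres_d d)"
    unfolding proj_complex_def
  proof (intro conjI allI ballI)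
    fix j :: int
    show "fg_projective n k (pres_cx P1 P0 j)"
      using p1 p0 Zm_proj[of n k] unfolding cx_eq by (cases "j = 0"; cases "j = 1") auto
    show "rhom n k (pres_cx P1 P0 j) (pres_cx P1 P0 (j + 1)) (pres_d d j)"
    proof (cases "j = 0")
      case True then show ?thesis using d by (simp add: cx_eq pd_eq)
    next
      case False then show ?thesis using zmap[OF rmC[of "j+1"]] by (simp add: pd_eq)
    qed
    fix x assume x: "x \<in> carr (pres_cx P1 P0 j)"
    show "pres_d d (j + 1) (pres_d d j x) = 0"
    proof (cases "j = -1")
      case True then show ?thesis using x d0 by (simp add: cx_carr pd_eq)
    next
      case False then show ?thesis by (simp add: pd_eq)
    qed
  next
    show "finite {i. carr (pres_cx P1 P0 i) \<noteq> {0}}"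
      by (rule finite_subset[of _ "{0,1}"]) (auto simp: cx_carr)
  qed
  have null: "nullhomotopic_shift n k (pres_cx P1 P0) (pres_d d) s f"
    if s: "s \<noteq> 0" and f: "chain_map_shift n k (pres_cx P1 P0) (pres_d d) s f" for s f
  proof -
    have fh: "\<And>j. rhom n k (pres_cx P1 P0 j) (pres_cx P1 P0 (j+s)) (f j)"
      and fc: "\<And>j x. x \<in> carr (pres_cx P1 P0 j) \<Longrightarrow> f (j+1) (pres_d d j x) = sgn_shift s (pres_d d (j+s) (f j x))"
      using f unfolding chain_map_shift_def by auto
    have fz: "f j x = 0" if "x \<in> carr (pres_cx P1 P0 j)" "j \<notin> {0,1} \<or> j + s \<notin> {0,1}" for j x
      using f_zero[OF fh[of j] rmC[of j] _ that(1)] that(2) by (auto simp: cx_carr)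
    show ?thesis
    proof (cases "s = 1")
      case s1: True
      obtain h0 where h0: "rhom n k P1 P1 h0" "\<forall>x\<in>carr P1. f 0 x = - d (h0 x)"
        using A[of "f 0"] fh[of 0] s1 by (auto simp: cx_eq)
      define hh where "hh j = (if j = (0::int) then h0 else (\<lambda>_. 0))" for j
      show ?thesis
        unfolding nullhomotopic_shift_def
      proof (intro exI[of _ hh] conjI allI ballI)
        fix j :: int
        show "rhom n k (pres_cx P1 P0 j) (pres_cx P1 P0 (j + s - 1)) (hh j)"
        proof (cases "j = 0")
          case True then show ?thesis using h0(1) s1 by (simp add: hh_def cx_eq)
        next
          case False then show ?thesis using zmap[OF rmC[of "j+s-1"]] by (simp add: hh_def)
        qed
        fix x assume x: "x \<in> carr (pres_cx P1 P0 j)"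
        show "f j x = sgn_shift s (pres_d d (j + s - 1) (hh j x)) + hh (j + 1) (pres_d d j x)"
        proof (cases "j = 0")
          case True then show ?thesis using x h0 s1 by (simp add: hh_def pd_eq sgn1 cx_carr)
        next
          case j0: False
          show ?thesis
          proof (cases "j = -1")
            case True
            then have "x = 0" using x by (simp add: cx_carr)
            moreover have "h0 0 = 0" using rhom_0[OF h0(1) z1] .
            moreover have "f j 0 = 0" using fz[of 0 j] True zc s1 by simp
            ultimately show ?thesis using True s1 d0 by (simp add: hh_def pd_eq sgn1)
          next
            case False
            have "f j x = 0" using fz[OF x] j0 False s1 by auto
            then show ?thesis using j0 False s1 d0 by (simp add: hh_def pd_eq sgn1)
          qed
        qed
      qed
    next
      case n1: False
      have allz: "\<forall>j. \<forall>x\<in>carr (pres_cx P1 P0 j). f j x = 0"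
      proof (cases "s = -1")
        case sm: True
        have f1h: "rhom n k P0 P1 (f 1)" using fh[of 1] sm by (simp add: cx_eq)
        have "\<forall>x\<in>carr P0. d (f 1 x) = 0"
        proof
          fix x assume x: "x \<in> carr P0"
          have "f 2 (pres_d d 1 x) = sgn_shift s (pres_d d 0 (f 1 x))"
            using fc[of x 1] x sm by (simp add: cx_carr)
          moreover have "f 2 0 = 0" using fz[of 0 2] zc sm by simp
          ultimately show "d (f 1 x) = 0" using sm by (simp add: pd_eq sgnm1)
        qed
        then have f1z: "\<forall>x\<in>carr P0. f 1 x = 0" using B[OF f1h] by simp
        show ?thesis
        proof (intro allI ballI)
          fix j x assume x: "x \<in> carr (pres_cx P1 P0 j)"
          show "f j x = 0"
          proof (cases "j = 1")
            case True then show ?thesis using f1z x by (simp add: cx_carr)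
          next
            case False then show ?thesis using fz[OF x] sm by auto
          qed
        qed
      next
        case False
        show ?thesis
        proof (intro allI ballI)
          fix j x assume x: "x \<in> carr (pres_cx P1 P0 j)"
          have "j \<notin> {0,1} \<or> j + s \<notin> {0,1}" using s n1 False by auto
          then show "f j x = 0" using fz[OF x] by blast
        qed
      qed
      show ?thesis
        unfolding nullhomotopic_shift_def
      proof (intro exI[of _ "\<lambda>j _. 0"] conjI allI ballI)
        fix j :: int
        show "rhom n k (pres_cx P1 P0 j) (pres_cx P1 P0 (j + s - 1)) (\<lambda>_. 0)" using zmap[OF rmC[of "j+s-1"]] .
        fix x assume "x \<in> carr (pres_cx P1 P0 j)"
        then show "f j x = sgn_shift s (pres_d d (j + s - 1) 0) + 0" using allz D0 sgn0 by simp
      qed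
    qed
  qed
  show ?thesis unfolding partial_tilting_def using pc null by blast
qed

lemma not_tilting_crit:
  fixes P1 P0 :: "('m::ab_group_add, 'k::field) rmod"
  assumes r1: "rmodule n k P1" and r0: "rmodule n k P0" and d: "rhom n k P1 P0 d"
    and f0: "rhom n k P1 P0 f0"
    and no: "\<And>h0 h1. rhom n k P1 P1 h0 \<Longrightarrow> rhom n k P0 P0 h1 \<Longrightarrow> \<exists>x\<in>carr P1. f0 x \<noteq> - d (h0 x) + h1 (d x)"
  shows "\<not> partial_tilting n k (pres_cx P1 P0) (pres_d d)"
proof
  assume pt: "partial_tilting n k (pres_cx P1 P0) (pres_d d)"
  have rmC: "rmodule n k (pres_cx P1 P0 j)" for j
    using r1 r0 Zm_rm[of n k] unfolding cx_eq by (cases "j = 0"; cases "j = 1") auto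
  have z1: "0 \<in> carr P1" and z0: "0 \<in> carr P0" using r1 r0 by (auto simp: rmodule_def)
  have d0: "d 0 = 0" using rhom_0[OF d z1] .
  define f where "f j = (if j = (0::int) then f0 else (\<lambda>_. 0))" for j
  have cm: "chain_map_shift n k (pres_cx P1 P0) (pres_d d) 1 f"
    unfolding chain_map_shift_def
  proof (intro conjI allI ballI)
    fix j :: int
    show "rhom n k (pres_cx P1 P0 j) (pres_cx P1 P0 (j + 1)) (f j)"
    proof (cases "j = 0")
      case True then show ?thesis using f0 by (simp add: f_def cx_eq)
    next
      case False then show ?thesis using zmap[OF rmC[of "j+1"]] by (simp add: f_def)
    qed
    fix x assume x: "x \<in> carr (pres_cx P1 P0 j)"
    show "f (j + 1) (pres_d d j x) = sgn_shift 1 (pres_d d (j + 1) (f j x))"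
    proof (cases "j = -1")
      case True
      then have "x = 0" using x by (simp add: cx_carr)
      moreover have "f0 0 = 0" using rhom_0[OF f0 z1] .
      ultimately show ?thesis using True d0 by (simp add: f_def pd_eq sgn1)
    next
      case False then show ?thesis by (simp add: f_def pd_eq sgn1)
    qed
  qed
  then have "nullhomotopic_shift n k (pres_cx P1 P0) (pres_d d) 1 f"
    using pt unfolding partial_tilting_def by auto
  then obtain hh where hh: "\<And>j. rhom n k (pres_cx P1 P0 j) (pres_cx P1 P0 (j + 1 - 1)) (hh j)"
    "\<And>j x. x \<in> carr (pres_cx P1 P0 j) \<Longrightarrow> f j x = sgn_shift 1 (pres_d d (j + 1 - 1) (hh j x)) + hh (j + 1) (pres_d d j x)"
    unfolding nullhomotopic_shift_def by blast
  have h0: "rhom n k P1 P1 (hh 0)" using hh(1)[of 0] by (simp add: cx_eq)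
  have h1: "rhom n k P0 P0 (hh 1)" using hh(1)[of 1] by (simp add: cx_eq)
  obtain x where x: "x \<in> carr P1" "f0 x \<noteq> - d (hh 0 x) + hh 1 (d x)" using no[OF h0 h1] by blast
  have "f 0 x = sgn_shift 1 (pres_d d (0 + 1 - 1) (hh 0 x)) + hh (0 + 1) (pres_d d 0 x)"
    using hh(2)[of x 0] x by (simp add: cx_carr)
  then show False using x by (simp add: f_def pd_eq sgn1)
qed


lemma rhom_in: "rhom n k X Y f \<Longrightarrow> x \<in> carr X \<Longrightarrow> f x \<in> carr Y" by (simp add: rhom_def)
lemma rhom_add: "rhom n k X Y f \<Longrightarrow> x \<in> carr X \<Longrightarrow> y \<in> carr X \<Longrightarrow> f (x + y) = f x + f y" by (simp add: rhom_def)
lemma rhom_act: "rhom n k X Y f \<Longrightarrow> x \<in> carr X \<Longrightarrow> is_alg n k a \<Longrightarrow> f (act X x a) = act Y (f x) a" by (simp add: rhom_def)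
lemma rhom_diff:
  assumes f: "rhom n k X Y f" and X: "rmodule n k X" and x: "x \<in> carr X" "y \<in> carr X"
  shows "f (x - y) = f x - f y"
proof -
  have "- y \<in> carr X" using X x(2) unfolding rmodule_def by blast
  then have "x + - y \<in> carr X" using X x(1) unfolding rmodule_def by blast
  then have "x - y \<in> carr X" by simp
  then have "f ((x - y) + y) = f (x - y) + f y" using rhom_add[OF f] x by blast
  then show ?thesis by (simp add: eq_diff_eq)
qed
lemma rhom_uminus:
  assumes f: "rhom n k X Y f" and X: "rmodule n k X" and x: "x \<in> carr X"
  shows "f (- x) = - f x"
proof -
  have z: "0 \<in> carr X" using X by (simp add: rmodule_def)
  have "f (0 - x) = f 0 - f x" using rhom_diff[OF f X z x] .
  then show ?thesis using rhom_0[OF f z] by simp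
qed

lemma nk_bound:
  fixes h t n k :: nat
  assumes "(h + t) mod n = 0" "t \<le> n*k" "h < n"
  shows "h + t \<le> n*k"
proof -
  obtain q where q: "h + t = n * q" using assms(1) by (metis mod_eq_0_iff_dvd dvd_def)
  have "n * q < n * (k + 1)" using q assms(2,3) by (simp add: algebra_simps)
  then have "q \<le> k" by (metis Suc_eq_plus1 less_Suc_eq_le mult_less_cancel1)
  then show ?thesis using q by simp
qed

context bst begin
lemma ends_mod: "ends n (m mod n) a = ends n m a" by (simp add: ends_def)
lemma pp_mod: "P (i mod n) l = P i l" by (simp add: pp_def)
end

context bcyc begin

lemma tilt:
  fixes P1 P0 :: "('a fvec, 'a) rmod" and d :: "'a fvec \<Rightarrow> 'a fvec" and e :: "'a fvec \<Rightarrow> 'm"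
  assumes hn: "h < n" and hk: "h \<le> n*k" and mp: "min_proj_pres n k M P1 P0 d e"
  shows "partial_tilting n k (pres_cx P1 P0) (pres_d d)"
proof -
  have p1: "fg_projective n k P1" and p0: "fg_projective n k P0" and rhd: "rhom n k P1 P0 d"
    and rhe: "rhom n k P0 M e" and esur: "e ` carr P0 = C"
    and dim: "d ` carr P1 = {x \<in> carr P0. e x = 0}"
    and sup0: "superfluous n k {x \<in> carr P0. e x = 0} P0"
    and sup1: "superfluous n k {x \<in> carr P1. d x = 0} P1"
    using mp unfolding min_proj_pres_def by auto
  have r0: "rmodule n k P0" and r1: "rmodule n k P1" using p0 p1 by (auto simp: fg_projective_def)
  interpret X0: bmod n k P0 by unfold_locales (simp_all add: npos r0)
  interpret X1: bmod n k P1 by unfold_locales (simp_all add: npos r1)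
  obtain x0 where x0: "x0 \<in> carr P0" "e x0 = v" using esur vC by force
  define x where "x = X0.ac x0 (Q i 0)"
  have xP: "x \<in> carr P0" using x0 by (simp add: x_def)
  have ex: "e x = v" using rhom_act[OF rhe x0(1), of "Q i 0"] x0 ve by (simp add: x_def)
  have xe: "X0.ac x (Q i 0) = x" using X0.ac_mult[OF x0(1), of "Q i 0" "Q i 0"] by (simp add: x_def pp_pp)
  have xhom: "X0.homog x i" using xP i_lt xe by (simp add: X0.homog_def)
  have eax: "e (X0.ac x a) = ac v a" if "ia a" for a using rhom_act[OF rhe xP that] ex by simp
  have genx: "carr P0 = X0.vA x"
  proof -
    have U: "submodule n k (X0.vA x) P0" using X0.vA_submodule[OF xP] .
    have "setsum (X0.vA x) {x \<in> carr P0. e x = 0} = carr P0"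
    proof
      show "setsum (X0.vA x) {x \<in> carr P0. e x = 0} \<subseteq> carr P0"
        unfolding setsum_def using X0.vA_sub[OF xP] by auto
      show "carr P0 \<subseteq> setsum (X0.vA x) {x \<in> carr P0. e x = 0}"
      proof
        fix y assume y: "y \<in> carr P0"
        then have "e y \<in> C" using rhom_in[OF rhe] by blast
        then obtain a where a: "ia a" "e y = ac v a" using gen by (auto simp: vA_def)
        define u where "u = X0.ac x a"
        have uP: "u \<in> carr P0" using xP a by (simp add: u_def)
        have "e (y - u) = 0" using rhom_diff[OF rhe r0 y uP] a eax by (simp add: u_def)
        moreover have "y = u + (y - u)" by simp
        moreover have "u \<in> X0.vA x" using a by (auto simp: u_def X0.vA_def)
        moreover have "y - u \<in> carr P0" using y uP by simp
        ultimately have "\<exists>u' w'. y = u' + w' \<and> u' \<in> X0.vA x \<and> w' \<in> {x \<in> carr P0. e x = 0}" by blast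
        then show "y \<in> setsum (X0.vA x) {x \<in> carr P0. e x = 0}"
          unfolding setsum_def by simp
      qed
    qed
    then have "X0.vA x = carr P0" using sup0 U unfolding superfluous_def by blast
    then show ?thesis by simp
  qed
  have xnz: "x \<noteq> 0" using ex v_nz rhom_0[OF rhe X0.zero_in] by auto
  have free0: "mul (Q i 0) a = 0" if "ia a" "X0.ac x a = 0" for a
    using X0.proj_free[OF p0 xhom xnz genx that] .
  define xp where "xp = X0.ac x (Q i h)"
  have xpP: "xp \<in> carr P0" using xP by (simp add: xp_def)
  have kerc: "\<exists>a'. ia a' \<and> w = X0.ac xp a'" if w: "w \<in> carr P0" "e w = 0" for w
  proof -
    obtain a where a: "ia a" "w = X0.ac x a" using w genx by (auto simp: X0.vA_def)
    then have "ac v a = 0" using eax w by simp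
    then have z: "\<forall>t<h. a (i,t) = 0" using ann a(1) by simp
    define a1 where "a1 = mul (Q i 0) a"
    have s1: "starts n i a1" unfolding a1_def by (intro starts_mult starts_pp)
    have l1: "low h a1" unfolding low_def a1_def using e_left[OF a(1), of i] i_lt z by auto
    obtain a' where a': "ia a'" "a1 = mul (Q i h) a'" using ldiv[OF _ s1 l1] by (auto simp: a1_def)
    have "w = X0.ac x a1" using a xe xP by (simp add: a1_def X0.ac_mult)
    also have "\<dots> = X0.ac xp a'" using a' xP by (simp add: xp_def X0.ac_mult)
    finally show ?thesis using a' by blast
  qed
  have exp: "e xp = 0" using eax[of "Q i h"] vh by (simp add: xp_def)
  then obtain y0 where y0: "y0 \<in> carr P1" "d y0 = xp" using dim xpP by force
  define j where "j = (i + h) mod n"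
  have jn: "j < n" using npos by (simp add: j_def)
  have Qj: "Q j l = Q (i+h) l" for l by (simp add: j_def pp_mod)
  define y where "y = X1.ac y0 (Q j 0)"
  have yP: "y \<in> carr P1" using y0 by (simp add: y_def)
  have dy: "d y = xp"
  proof -
    have "d y = X0.ac xp (Q j 0)" using rhom_act[OF rhd y0(1), of "Q j 0"] y0 by (simp add: y_def)
    also have "\<dots> = X0.ac x (mul (Q i h) (Q (i+h) 0))" using xP by (simp add: xp_def X0.ac_mult Qj)
    also have "mul (Q i h) (Q (i+h) 0) = Q i h" by (simp add: pp_pp)
    finally show ?thesis by (simp add: xp_def)
  qed
  have ye: "X1.ac y (Q j 0) = y" using X1.ac_mult[OF y0(1), of "Q j 0" "Q j 0"] by (simp add: y_def pp_pp)
  have yhom: "X1.homog y j" using yP jn ye by (simp add: X1.homog_def)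
  have dya: "d (X1.ac y a) = X0.ac xp a" if "ia a" for a using rhom_act[OF rhd yP that] dy by simp
  have geny: "carr P1 = X1.vA y"
  proof -
    have U: "submodule n k (X1.vA y) P1" using X1.vA_submodule[OF yP] .
    have "setsum (X1.vA y) {x \<in> carr P1. d x = 0} = carr P1"
    proof
      show "setsum (X1.vA y) {x \<in> carr P1. d x = 0} \<subseteq> carr P1"
        unfolding setsum_def using X1.vA_sub[OF yP] by auto
      show "carr P1 \<subseteq> setsum (X1.vA y) {x \<in> carr P1. d x = 0}"
      proof
        fix z assume z: "z \<in> carr P1"
        have "d z \<in> {x \<in> carr P0. e x = 0}" using dim z by blast
        then obtain a' where a': "ia a'" "d z = X0.ac xp a'" using kerc by blast
        define u where "u = X1.ac y a'"
        have uP: "u \<in> carr P1" using yP a' by (simp add: u_def)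
        have "d (z - u) = 0" using rhom_diff[OF rhd r1 z uP] a' dya by (simp add: u_def)
        moreover have "z = u + (z - u)" by simp
        moreover have "u \<in> X1.vA y" using a' by (auto simp: u_def X1.vA_def)
        moreover have "z - u \<in> carr P1" using z uP by simp
        ultimately have "\<exists>u' w'. z = u' + w' \<and> u' \<in> X1.vA y \<and> w' \<in> {x \<in> carr P1. d x = 0}" by blast
        then show "z \<in> setsum (X1.vA y) {x \<in> carr P1. d x = 0}"
          unfolding setsum_def by simp
      qed
    qed
    then have "X1.vA y = carr P1" using sup1 U unfolding superfluous_def by blast
    then show ?thesis by simp
  qed
  have xpnz: "xp \<noteq> 0"
  proof
    assume "xp = 0"
    then have "mul (Q i 0) (Q i h) = 0" using free0[of "Q i h"] by (simp add: xp_def)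
    then have "(Q i h :: 'a alg) = 0" by (simp add: pp_pp)
    then have "(Q i h :: 'a alg) (i,h) = 0" by simp
    then show False using hk i_lt by (simp add: pp_def)
  qed
  have ynz: "y \<noteq> 0" using dy xpnz rhom_0[OF rhd X1.zero_in] by auto
  have free1: "mul (Q j 0) b = 0" if "ia b" "X1.ac y b = 0" for b
    using X1.proj_free[OF p1 yhom ynz geny that] .
  show ?thesis
  proof (rule tilting_crit[OF p1 p0 rhd])
    fix f0 assume f0: "rhom n k P1 P0 f0"
    obtain c where c: "ia c" "f0 y = X0.ac x c" using rhom_in[OF f0 yP] genx by (auto simp: X0.vA_def)
    define c1 where "c1 = mul (mul (Q i 0) c) (Q j 0)"
    have f0y: "f0 y = X0.ac x c1"
    proof -
      have "f0 y = X0.ac (f0 y) (Q j 0)" using rhom_act[OF f0 yP, of "Q j 0"] ye by simp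
      also have "\<dots> = X0.ac (X0.ac (X0.ac x (Q i 0)) c) (Q j 0)" using c xe by simp
      also have "\<dots> = X0.ac x c1" using xP c(1) by (simp add: c1_def X0.ac_mult)
      finally show ?thesis .
    qed
    have sc1: "starts n i c1" unfolding c1_def by (intro starts_mult starts_pp)
    have ec1: "ends n (i + h) c1"
      unfolding c1_def using ends_mult[OF ends_pp[of j 0]] by (simp add: j_def ends_mod)
    have lc1: "low h c1" using starts_ends_low[OF sc1 ec1 hn] .
    obtain c' where c': "ia c'" "c1 = mul (Q i h) c'" using ldiv[OF _ sc1 lc1] by (auto simp: c1_def)
    define c'' where "c'' = mul c' (Q j 0)"
    have ic'': "ia c''" by (simp add: c''_def)
    have c1'': "mul (Q i h) c'' = c1"
    proof -
      have "mul (Q i h) c'' = mul c1 (Q j 0)" using c' by (simp add: c''_def mult_assoc)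
      also have "\<dots> = c1" using ends_e[of c1 j] ec1 by (simp add: c1_def ends_mod j_def)
      finally show ?thesis .
    qed
    have f0y': "f0 y = X0.ac (d y) c''"
      using f0y dy xP c1'' ic'' X0.ac_mult[of x "Q i h" c''] by (simp add: xp_def)
    have wd: "mul c'' b = mul c'' b'" if "ia b" "ia b'" "X1.ac y b = X1.ac y b'" for b b'
    proof -
      have "X1.ac y (b - b') = X1.ac y b - X1.ac y b'" by (rule X1.ac_diff_a[OF yP that(1,2)])
      then have "X1.ac y (b - b') = 0" using that(3) by simp
      then have "mul (Q j 0) (b - b') = 0" using free1[of "b - b'"] that(1,2) by simp
      then have e: "mul (Q j 0) b = mul (Q j 0) b'" by (simp add: mult_diff_right)
      have "mul c'' b = mul c' (mul (Q j 0) b)" by (simp add: c''_def mult_assoc)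
      also have "\<dots> = mul c' (mul (Q j 0) b')" by (simp only: e)
      also have "\<dots> = mul c'' b'" by (simp add: c''_def mult_assoc)
      finally show ?thesis .
    qed
    define h0 where "h0 z = - X1.ac y (mul c'' (SOME b. ia b \<and> z = X1.ac y b))" for z
    have h0_eq: "h0 (X1.ac y b) = - X1.ac y (mul c'' b)" if b: "ia b" for b
    proof -
      define b0 where "b0 = (SOME b'. ia b' \<and> X1.ac y b = X1.ac y b')"
      have "ia b0 \<and> X1.ac y b = X1.ac y b0" unfolding b0_def by (rule someI[of _ b]) (use b in simp)
      then have "mul c'' b0 = mul c'' b" using wd[of b0 b] b by simp
      then show ?thesis by (simp add: h0_def b0_def)
    qed
    have getb: "\<exists>b. ia b \<and> z = X1.ac y b" if "z \<in> carr P1" for z using that geny by (auto simp: X1.vA_def)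
    have rh0: "rhom n k P1 P1 h0"
      unfolding rhom_def
    proof (intro conjI ballI allI impI)
      fix z assume "z \<in> carr P1"
      then obtain b where "ia b" "z = X1.ac y b" using getb by blast
      then show "h0 z \<in> carr P1" using yP ic'' by (simp add: h0_eq)
    next
      fix z1 z2 assume "z1 \<in> carr P1" "z2 \<in> carr P1"
      then obtain b1 b2 where b: "ia b1" "z1 = X1.ac y b1" "ia b2" "z2 = X1.ac y b2" using getb by blast
      have e: "z1 + z2 = X1.ac y (b1 + b2)" using b yP by (simp add: X1.ac_add_a)
      have "h0 (z1 + z2) = - X1.ac y (mul c'' (b1 + b2))" unfolding e using b by (simp add: h0_eq)
      also have "\<dots> = - X1.ac y (mul c'' b1) + - X1.ac y (mul c'' b2)"
        using b yP ic'' by (simp add: mult_add_right X1.ac_add_a)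
      also have "\<dots> = h0 z1 + h0 z2" using b by (simp add: h0_eq)
      finally show "h0 (z1 + z2) = h0 z1 + h0 z2" .
    next
      fix z and a :: "'a alg" assume z: "z \<in> carr P1" and a: "ia a"
      then obtain b where b: "ia b" "z = X1.ac y b" using getb by blast
      have "X1.ac z a = X1.ac y (mul b a)" using b yP a by (simp add: X1.ac_mult)
      then have "h0 (X1.ac z a) = - X1.ac y (mul c'' (mul b a))" using b a by (simp add: h0_eq)
      also have "\<dots> = X1.ac (- X1.ac y (mul c'' b)) a"
        using yP ic'' b a by (simp add: X1.ac_uminus_v X1.ac_mult mult_assoc)
      finally show "h0 (X1.ac z a) = X1.ac (h0 z) a" using b by (simp add: h0_eq)
    qed
    have "\<forall>z\<in>carr P1. f0 z = - d (h0 z)"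
    proof
      fix z assume "z \<in> carr P1"
      then obtain b where b: "ia b" "z = X1.ac y b" using getb by blast
      have "f0 z = X0.ac (f0 y) b" using rhom_act[OF f0 yP b(1)] b by simp
      also have "\<dots> = X0.ac (d y) (mul c'' b)" using f0y' dy xpP ic'' b by (simp add: X0.ac_mult)
      also have "\<dots> = d (X1.ac y (mul c'' b))" using rhom_act[OF rhd yP, of "mul c'' b"] by simp
      also have "\<dots> = - d (h0 z)"
        using b h0_eq rhom_uminus[OF rhd r1, of "X1.ac y (mul c'' b)"] yP by simp
      finally show "f0 z = - d (h0 z)" .
    qed
    then show "\<exists>h0. rhom n k P1 P1 h0 \<and> (\<forall>x\<in>carr P1. f0 x = - d (h0 x))" using rh0 by blast
  next
    fix f1 assume f1: "rhom n k P0 P1 f1" and df: "\<forall>x\<in>carr P0. d (f1 x) = 0"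
    obtain c where c: "ia c" "f1 x = X1.ac y c" using rhom_in[OF f1 xP] geny by (auto simp: X1.vA_def)
    define c1 where "c1 = mul (mul (Q j 0) c) (Q i 0)"
    have f1x: "f1 x = X1.ac y c1"
    proof -
      have "f1 x = X1.ac (f1 x) (Q i 0)" using rhom_act[OF f1 xP, of "Q i 0"] xe by simp
      also have "\<dots> = X1.ac (X1.ac (X1.ac y (Q j 0)) c) (Q i 0)" using c ye by simp
      also have "\<dots> = X1.ac y c1" using yP c(1) by (simp add: c1_def X1.ac_mult)
      finally show ?thesis .
    qed
    have "d (f1 x) = X0.ac x (mul (Q i h) c1)"
      using f1x dya[of c1] xP by (simp add: c1_def xp_def X0.ac_mult)
    then have "X0.ac x (mul (Q i h) c1) = 0" using df xP by simp
    then have "mul (Q i 0) (mul (Q i h) c1) = 0" using free0 by (simp add: c1_def)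
    then have z: "mul (Q i h) c1 = 0" by (simp add: mult_assoc[symmetric] pp_pp)
    have sc1: "starts n j c1" unfolding c1_def by (intro starts_mult starts_pp)
    have ec1: "ends n i c1" unfolding c1_def using ends_mult[OF ends_pp[of i 0]] by simp
    have ic1: "ia c1" by (simp add: c1_def)
    have c10: "c1 = 0"
    proof (rule ext, clarify)
      fix j' t
      show "c1 (j',t) = 0 (j',t)"
      proof (rule ccontr)
        assume nz: "c1 (j',t) \<noteq> 0 (j',t)"
        then have nz': "c1 (j',t) \<noteq> 0" by simp
        have j': "j' = j" using nz' sc1 jn by (auto simp: starts_def)
        have tk: "t \<le> n*k" using nz' ic1 j' jn by (auto simp: is_alg_iff)
        have "(j + t) mod n = i mod n" using nz' ec1 j' by (auto simp: ends_def)
        then have "((i + h) mod n + t) mod n = i mod n" by (simp add: j_def)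
        then have "((i + h) + t) mod n = i mod n" by (simp add: mod_add_left_eq)
        then have "((h + t) + i) mod n = (0 + i) mod n" by (simp add: add_ac)
        then have "(h + t) mod n = 0" using mod_cancel_nat[of "h+t" i n 0] by simp
        then have ht: "h + t \<le> n*k" by (rule nk_bound[OF _ tk hn])
        have "mul (Q i h) c1 (i, h + t) = c1 ((i + h) mod n, t)"
          unfolding pp_left[OF npos] using ht i_lt by simp
        then show False using z nz' j' by (simp add: j_def)
      qed
    qed
    have f1x0: "f1 x = 0" using f1x c10 yP by simp
    show "\<forall>x\<in>carr P0. f1 x = 0"
    proof
      fix w assume "w \<in> carr P0"
      then obtain a where a: "ia a" "w = X0.ac x a" using genx by (auto simp: X0.vA_def)
      then show "f1 w = 0" using rhom_act[OF f1 xP a(1)] f1x0 by simp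
    qed
  qed
qed

end


definition emb :: "'a::field alg \<Rightarrow> 'a fvec" where "emb a = (\<lambda>j. if j = 0 then a else 0)"

definition cycm :: "nat \<Rightarrow> nat \<Rightarrow> nat \<Rightarrow> ('a::field fvec, 'a) rmod" where
  "cycm n k i = ({emb a | a. is_alg n k a \<and> alg_mult n k (pp n k i 0) a = a},
                 (\<lambda>x b. (\<lambda>j. alg_mult n k (x j) b)))"

lemma emb_0[simp]: "emb 0 = 0" by (simp add: emb_def fun_eq_iff)
lemma emb_add: "emb (a + b) = emb a + emb b" by (simp add: emb_def fun_eq_iff)
lemma emb_uminus: "emb (- a) = - emb a" by (simp add: emb_def fun_eq_iff)
lemma emb_0_apply[simp]: "emb a 0 = a" by (simp add: emb_def)
lemma emb_inj: "emb a = emb b \<Longrightarrow> a = b" by (metis emb_0_apply)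

context bst begin

lemma cycm_carr: "carr (cycm n k i) = {emb a | a. ia a \<and> mul (P i 0) a = a}"
  by (simp add: cycm_def carr_def)
lemma cycm_act_emb: "act (cycm n k i) (emb a) b = emb (mul a b)"
  by (simp add: cycm_def act_def emb_def fun_eq_iff)

lemma cycm_rm: "rmodule n k (cycm n k i :: ('a::field fvec, 'a) rmod)"
  unfolding rmodule_def cycm_carr
proof (intro conjI ballI allI impI)
  show "(0::'a fvec) \<in> {emb a | a. ia a \<and> mul (P i 0) a = a}"
    by (rule CollectI, rule exI[of _ 0]) simp
next
  fix v w assume "v \<in> {emb a | a. ia a \<and> mul (P i 0) a = (a::'a alg)}" "w \<in> {emb a | a. ia a \<and> mul (P i 0) a = (a::'a alg)}"
  then obtain a b where "v = emb a" "ia a" "mul (P i 0) a = a" "w = emb b" "ia b" "mul (P i 0) b = b" by blast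
  then show "v + w \<in> {emb a | a. ia a \<and> mul (P i 0) a = (a::'a alg)}"
    by (intro CollectI exI[of _ "a + b"]) (simp add: emb_add mult_add_right)
next
  fix v assume "v \<in> {emb a | a. ia a \<and> mul (P i 0) a = (a::'a alg)}"
  then obtain a where "v = emb a" "ia a" "mul (P i 0) a = a" by blast
  then show "- v \<in> {emb a | a. ia a \<and> mul (P i 0) a = (a::'a alg)}"
    by (intro CollectI exI[of _ "- a"]) (simp add: emb_uminus mult_uminus_right)
next
  fix v and b :: "'a alg" assume v: "v \<in> {emb a | a. ia a \<and> mul (P i 0) a = (a::'a alg)}" and b: "ia b"
  then obtain a where a: "v = emb a" "ia a" "mul (P i 0) a = a" by blast
  have m: "mul (P i 0) (mul a b) = mul a b" using a by (simp add: mult_assoc[symmetric])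
  have e: "act (cycm n k i) v b = emb (mul a b)" using a by (simp add: cycm_act_emb)
  have "ia (mul a b)" by simp
  then show "act (cycm n k i) v b \<in> {emb a | a. ia a \<and> mul (P i 0) a = (a::'a alg)}"
    using m e by blast
next
  fix v w and b :: "'a alg"
  assume v: "v \<in> {emb a | a. ia a \<and> mul (P i 0) a = (a::'a alg)}" and w: "w \<in> {emb a | a. ia a \<and> mul (P i 0) a = (a::'a alg)}"
  then obtain a a' where "v = emb a" "w = emb a'" by blast
  then show "act (cycm n k i) (v + w) b = act (cycm n k i) v b + act (cycm n k i) w b"
    by (simp add: emb_add[symmetric] cycm_act_emb mult_add_left)
next
  fix v and a b :: "'a alg" assume "v \<in> {emb a | a. ia a \<and> mul (P i 0) a = (a::'a alg)}"
  then obtain c where "v = emb c" by blast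
  then show "act (cycm n k i) v (alg_add a b) = act (cycm n k i) v a + act (cycm n k i) v b"
    by (simp add: cycm_act_emb alg_add_eq mult_add_right emb_add)
next
  fix v and a b :: "'a alg" assume "v \<in> {emb a | a. ia a \<and> mul (P i 0) a = (a::'a alg)}"
  then obtain c where "v = emb c" by blast
  then show "act (cycm n k i) v (mul a b) = act (cycm n k i) (act (cycm n k i) v a) b"
    by (simp add: cycm_act_emb mult_assoc)
next
  fix v assume "v \<in> {emb a | a. ia a \<and> mul (P i 0) a = (a::'a alg)}"
  then obtain c where "v = emb c" "ia c" by blast
  then show "act (cycm n k i) v (alg_one n k) = v" by (simp add: cycm_act_emb one_right)
qed

lemma cycm_in: "ia a \<Longrightarrow> mul (P i 0) a = a \<Longrightarrow> emb a \<in> carr (cycm n k i)"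
  by (auto simp: cycm_carr)

lemma cycm_elem: "x \<in> carr (cycm n k i) \<Longrightarrow> \<exists>a. x = emb a \<and> ia a \<and> mul (P i 0) a = a"
  by (auto simp: cycm_carr)

lemma cycm_proj: assumes i: "i < n" shows "fg_projective n k (cycm n k i :: ('a::field fvec, 'a) rmod)"
proof -
  interpret Y: bmod n k "cycm n k i :: ('a fvec, 'a) rmod" by unfold_locales (simp_all add: npos cycm_rm)
  have ee: "mul (P i 0) (P i 0) = (P i 0 :: 'a alg)" by (simp add: pp_pp)
  have epsC: "emb (P i 0 :: 'a alg) \<in> carr (cycm n k i)" using ee by (intro cycm_in) simp_all
  have hom: "Y.homog (emb (P i 0)) i" using epsC i ee by (simp add: Y.homog_def cycm_act_emb)
  have gen: "Y.C = Y.vA (emb (P i 0))"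
  proof
    show "Y.C \<subseteq> Y.vA (emb (P i 0))"
    proof
      fix x assume "x \<in> Y.C"
      then obtain a where a: "x = emb a" "ia a" "mul (P i 0) a = a" using cycm_elem by blast
      then have "x = Y.ac (emb (P i 0)) a" by (simp add: cycm_act_emb)
      then show "x \<in> Y.vA (emb (P i 0))" using a by (auto simp: Y.vA_def)
    qed
    show "Y.vA (emb (P i 0)) \<subseteq> Y.C" using Y.vA_sub[OF epsC] .
  qed
  show ?thesis
  proof (rule Y.cyc_proj[OF hom gen])
    fix a :: "'a alg" assume "ia a" "Y.ac (emb (P i 0)) a = 0"
    then show "mul (Y.Q i 0) a = 0" by (simp add: cycm_act_emb) (metis emb_0 emb_inj)
  qed
qed

lemma cycm_sup:
  assumes i: "i < n" and X: "\<And>x. x \<in> X \<Longrightarrow> (x 0) (i,0) = 0"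
  shows "superfluous n k X (cycm n k i :: ('a::field fvec, 'a) rmod)"
  unfolding superfluous_def
proof (intro allI impI)
  interpret Y: bmod n k "cycm n k i :: ('a fvec, 'a) rmod" by unfold_locales (simp_all add: npos cycm_rm)
  fix U :: "'a fvec set" assume U: "submodule n k U (cycm n k i)" and S: "setsum U X = carr (cycm n k i)"
  have ee: "mul (P i 0) (P i 0) = (P i 0 :: 'a alg)" by (simp add: pp_pp)
  define eps where "eps = emb (P i 0 :: 'a alg)"
  have epsC: "eps \<in> carr (cycm n k i)" using ee unfolding eps_def by (intro cycm_in) simp_all
  then obtain u w where uw: "eps = u + w" "u \<in> U" "w \<in> X" using S unfolding setsum_def by blast
  have uC: "u \<in> carr (cycm n k i)" using uw(2) Y.sub_facts(1)[OF U] by auto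
  then obtain a where a: "u = emb a" "ia a" "mul (P i 0) a = a" using cycm_elem by blast
  have u_eq: "Y.ac eps a = u" using a by (simp add: eps_def cycm_act_emb)
  have ue: "u = eps - w" using uw(1) by (simp add: eq_diff_eq)
  have "a = u 0" using a(1) by simp
  then have "a = eps 0 - w 0" using ue by simp
  then have "a (i,0) = (P i 0 :: 'a alg) (i,0) - (w 0) (i,0)" by (simp add: eps_def)
  then have a0: "a (i,0) = 1" using X[OF uw(3)] i by (simp add: pp_def)
  have epse: "Y.ac eps (P i 0) = eps" using ee by (simp add: eps_def cycm_act_emb)
  have "Y.ac eps (P i 0) \<in> U"
    using Y.U_lemma[OF U epsC i epse a(2), of 0] u_eq uw(2) a0 by simp
  then have epsU: "eps \<in> U" using epse by simp
  show "U = carr (cycm n k i)"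
  proof
    show "U \<subseteq> carr (cycm n k i)" using Y.sub_facts(1)[OF U] .
    show "carr (cycm n k i) \<subseteq> U"
    proof
      fix x :: "'a fvec" assume "x \<in> carr (cycm n k i)"
      then obtain b where b: "x = emb b" "ia b" "mul (P i 0) b = b" using cycm_elem by blast
      then have "x = Y.ac eps b" by (simp add: eps_def cycm_act_emb)
      then show "x \<in> U" using Y.sub_facts(5)[OF U epsU b(2)] by simp
    qed
  qed
qed

end


context bcyc begin

lemma cycm_act: "act (cycm n k j) z b = (\<lambda>l. mul (z l) b)"
  by (simp add: cycm_def act_def)

lemma nontilt:
  assumes hn: "n \<le> h" and hk: "h \<le> n*k"
  shows "\<exists>(P1 :: ('a fvec, 'a) rmod) P0 d (e :: 'a fvec \<Rightarrow> 'm). min_proj_pres n k M P1 P0 d e \<and>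
           \<not> partial_tilting n k (pres_cx P1 P0) (pres_d d)"
proof -
  define j where "j = (i + h) mod n"
  have jn: "j < n" using npos by (simp add: j_def)
  have Qj: "Q j l = Q (i+h) l" for l by (simp add: j_def pp_mod)
  define P0 where "P0 = (cycm n k i :: ('a fvec, 'a) rmod)"
  define P1 where "P1 = (cycm n k j :: ('a fvec, 'a) rmod)"
  define e where "e x = ac v (x (0::nat))" for x :: "'a fvec"
  define d where "d x = emb (mul (Q i h) (x (0::nat)))" for x :: "'a fvec"
  have p0: "fg_projective n k P0" unfolding P0_def by (rule cycm_proj[OF i_lt])
  have p1: "fg_projective n k P1" unfolding P1_def by (rule cycm_proj[OF jn])
  have r0: "rmodule n k P0" and r1: "rmodule n k P1" using p0 p1 by (auto simp: fg_projective_def)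
  have eQ: "mul (Q l 0) (mul (Q l s) a) = mul (Q l s) a" for l s a
    by (simp add: mult_assoc[symmetric] pp_pp)
  have lmap: "rhom n k P1 P0 (\<lambda>x. emb (mul (Q i s) (x 0)))" if s: "(i + s) mod n = j" for s
    unfolding rhom_def
  proof (intro conjI ballI allI impI)
    fix x assume "x \<in> carr P1"
    then obtain a where a: "x = emb a" "ia a" using cycm_elem unfolding P1_def by blast
    show "emb (mul (Q i s) (x 0)) \<in> carr P0" unfolding P0_def using a eQ by (intro cycm_in) simp_all
  next
    fix x y assume "x \<in> carr P1" "y \<in> carr P1"
    then show "emb (mul (Q i s) ((x + y) 0)) = emb (mul (Q i s) (x 0)) + emb (mul (Q i s) (y 0))"
      by (simp add: mult_add_right emb_add)
  next
    fix x and b :: "'a alg" assume "x \<in> carr P1" "ia b"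
    then obtain a where a: "x = emb a" using cycm_elem unfolding P1_def by blast
    show "emb (mul (Q i s) (act P1 x b 0)) = act P0 (emb (mul (Q i s) (x 0))) b"
      using a by (simp add: P0_def P1_def cycm_act_emb mult_assoc)
  qed
  have rhd: "rhom n k P1 P0 d" unfolding d_def using lmap[of h] by (simp add: j_def)
  have rhe: "rhom n k P0 M e"
    unfolding rhom_def
  proof (intro conjI ballI allI impI)
    fix x assume "x \<in> carr P0"
    then obtain a where a: "x = emb a" "ia a" using cycm_elem unfolding P0_def by blast
    then show "e x \<in> C" using vC by (simp add: e_def)
  next
    fix x y assume "x \<in> carr P0" "y \<in> carr P0"
    then obtain a b where a: "x = emb a" "ia a" "y = emb b" "ia b" using cycm_elem unfolding P0_def by metis
    then show "e (x + y) = e x + e y" using vC by (simp add: e_def ac_add_a)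
  next
    fix x and b :: "'a alg" assume "x \<in> carr P0" "ia b"
    then obtain a where a: "x = emb a" "ia a" using cycm_elem unfolding P0_def by blast
    then show "e (act P0 x b) = ac (e x) b" using vC \<open>ia b\<close>
      by (simp add: e_def P0_def cycm_act_emb ac_mult)
  qed
  have esur: "e ` carr P0 = C"
  proof
    show "e ` carr P0 \<subseteq> C" using rhe by (auto simp: rhom_def)
    show "C \<subseteq> e ` carr P0"
    proof
      fix w assume "w \<in> C"
      then obtain a where a: "ia a" "w = ac v a" using gen by (auto simp: vA_def)
      define a1 where "a1 = mul (Q i 0) a"
      have "emb a1 \<in> carr P0" unfolding P0_def a1_def using eQ[of i 0 a] by (intro cycm_in) simp_all
      moreover have "e (emb a1) = w" using a ve vC by (simp add: e_def a1_def ac_mult)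
      ultimately show "w \<in> e ` carr P0" by force
    qed
  qed
  have dim: "d ` carr P1 = {x \<in> carr P0. e x = 0}"
  proof
    show "d ` carr P1 \<subseteq> {x \<in> carr P0. e x = 0}"
    proof
      fix z assume "z \<in> d ` carr P1"
      then obtain x where x: "x \<in> carr P1" "z = d x" by blast
      then obtain a where a: "x = emb a" "ia a" using cycm_elem unfolding P1_def by blast
      have "z \<in> carr P0" using x rhd by (simp add: rhom_def)
      moreover have "e z = 0" using x a vC vh by (simp add: e_def d_def ac_mult)
      ultimately show "z \<in> {x \<in> carr P0. e x = 0}" by simp
    qed
    show "{x \<in> carr P0. e x = 0} \<subseteq> d ` carr P1"
    proof
      fix x assume "x \<in> {x \<in> carr P0. e x = 0}"
      then have x: "x \<in> carr P0" "e x = 0" by auto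
      then obtain a where a: "x = emb a" "ia a" "mul (Q i 0) a = a" using cycm_elem unfolding P0_def by blast
      have "ac v a = 0" using x a by (simp add: e_def)
      then have z: "\<forall>t<h. a (i,t) = 0" using ann a(2) by simp
      have sa: "starts n i a" using starts_mult[OF starts_pp[of i 0], of a] a(3) by simp
      have la: "low h a" unfolding low_def
      proof (intro allI impI)
        fix j' l assume "l < h"
        show "a (j',l) = 0"
        proof (cases "j' = i")
          case True then show ?thesis using z \<open>l < h\<close> by simp
        next
          case False then show ?thesis using sa i_lt by (simp add: starts_def)
        qed
      qed
      obtain a' where a': "ia a'" "a = mul (Q i h) a'" using ldiv[OF a(2) sa la] by blast
      define a'' where "a'' = mul (Q j 0) a'"
      have "mul (Q i h) a'' = a" using a' by (simp add: a''_def mult_assoc[symmetric] pp_pp j_def)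
      moreover have "emb a'' \<in> carr P1" unfolding P1_def a''_def using eQ[of j 0 a'] by (intro cycm_in) simp_all
      ultimately have "d (emb a'') = x" "emb a'' \<in> carr P1" using a(1) by (simp_all add: d_def)
      then show "x \<in> d ` carr P1" by (metis image_eqI)
    qed
  qed
  have sup0: "superfluous n k {x \<in> carr P0. e x = 0} P0"
    unfolding P0_def
  proof (rule cycm_sup[OF i_lt])
    fix x assume "x \<in> {x \<in> carr (cycm n k i). e x = 0}"
    then have x: "x \<in> carr (cycm n k i)" "e x = 0" by auto
    then obtain a where a: "x = emb a" "ia a" using cycm_elem by blast
    then have "ac v a = 0" using x by (simp add: e_def)
    then have "a (i,0) = 0" using ann a(2) h_pos by simp
    then show "(x 0) (i,0) = 0" using a by simp
  qed
  have sup1: "superfluous n k {x \<in> carr P1. d x = 0} P1"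
    unfolding P1_def
  proof (rule cycm_sup[OF jn])
    fix x assume "x \<in> {x \<in> carr (cycm n k j). d x = 0}"
    then have x: "x \<in> carr (cycm n k j)" "d x = 0" by auto
    then obtain b where b: "x = emb b" "ia b" using cycm_elem by blast
    then have "mul (Q i h) b = 0" using x by (simp add: d_def) (metis emb_0 emb_inj)
    then have "mul (Q i h) b (i,h) = 0" by simp
    moreover have "mul (Q i h) b (i,h) = b ((i+h) mod n, 0)"
      unfolding pp_left[OF npos] using hk i_lt by simp
    ultimately show "(x 0) (j,0) = 0" using b by (simp add: j_def)
  qed
  have mp: "min_proj_pres n k M P1 P0 d e"
    unfolding min_proj_pres_def using p0 p1 rhd rhe esur dim sup0 sup1 by blast
  define f0 where "f0 x = emb (mul (Q i (h - n)) (x (0::nat)))" for x :: "'a fvec"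
  have hmod: "(i + (h - n)) mod n = j"
  proof -
    have "(i + (h - n) + n) mod n = (i + (h - n)) mod n" by simp
    moreover have "i + (h - n) + n = i + h" using hn by simp
    ultimately show ?thesis by (simp add: j_def)
  qed
  have rf0: "rhom n k P1 P0 f0" unfolding f0_def using lmap[OF hmod] .
  have no: "\<exists>x\<in>carr P1. f0 x \<noteq> - d (h0 x) + h1 (d x)"
    if h0: "rhom n k P1 P1 h0" and h1: "rhom n k P0 P0 h1" for h0 h1
  proof -
    define x where "x = emb (Q j 0 :: 'a alg)"
    have xP: "x \<in> carr P1" unfolding x_def P1_def by (intro cycm_in) (simp_all add: pp_pp)
    define eps where "eps = emb (Q i 0 :: 'a alg)"
    have epsP: "eps \<in> carr P0" unfolding eps_def P0_def by (intro cycm_in) (simp_all add: pp_pp)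
    have dx: "d x = act P0 eps (Q i h)"
      by (simp add: d_def x_def eps_def P0_def cycm_act_emb pp_pp Qj)
    have h1d: "h1 (d x) 0 = mul (h1 eps 0) (Q i h)"
      using rhom_act[OF h1 epsP, of "Q i h"] dx by (simp add: P0_def cycm_act)
    have f0x: "f0 x 0 = Q i (h - n)" using hmod jn by (simp add: f0_def x_def pp_pp)
    have lowv: "(mul (Q i h) b) (i, h - n) = 0" for b :: "'a alg"
      using low_mult_l[OF low_pp[of h i], of b] npos hn unfolding low_def by simp
    have lowv2: "(mul b (Q i h)) (i, h - n) = 0" for b :: "'a alg"
      using low_mult_r[OF low_pp[of h i], of b] npos hn unfolding low_def by simp
    have "(- d (h0 x) + h1 (d x)) 0 (i, h - n) = 0"
      using lowv lowv2 h1d by (simp add: d_def)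
    moreover have "f0 x 0 (i, h - n) = 1" using f0x hk i_lt by (simp add: pp_def)
    ultimately have "f0 x \<noteq> - d (h0 x) + h1 (d x)" by auto
    then show ?thesis using xP by blast
  qed
  have "\<not> partial_tilting n k (pres_cx P1 P0) (pres_d d)"
    using not_tilting_crit[OF r1 r0 rhd rf0] no by blast
  then show ?thesis using mp by blast
qed

end

theorem proposition3:
  fixes n k :: nat
    and M :: "('m::ab_group_add, 'k::field) rmod"
  assumes "alg_closed_field TYPE('k)"
    and "n \<ge> 1" and "k \<ge> 1"
    and "rmodule n k M" and "fingen n k M"
    and "indecomposable n k M" and "\<not> fg_projective n k M"
  shows "(\<forall>(P1 :: ('k fvec, 'k) rmod) P0 d e. min_proj_pres n k M P1 P0 d e \<longrightarrow>
            partial_tilting n k (pres_cx P1 P0) (pres_d d))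
         \<longleftrightarrow> modlength n k M < n"
proof -
  interpret B: bmod n k M by unfold_locales (use assms in auto)
  have "B.C \<noteq> {0}" using assms(6) by (simp add: indecomposable_def)
  then obtain v i where bm: "bmax n k M v i (B.ht i v)" using B.exists_max by blast
  interpret X: bmax n k M v i "B.ht i v" by (rule bm)
  have cy: "B.C = B.vA v" using X.cyclic[OF assms(5,6)] .
  interpret Y: bcyc n k M v i "B.ht i v" by unfold_locales (rule cy)
  have ml: "modlength n k M = B.ht i v" by (rule Y.modlength_eq)
  have hk: "B.ht i v \<le> n*k" using Y.h_le_nk[OF assms(7)] .
  show ?thesis
  proof
    assume all: "\<forall>(P1 :: ('k fvec, 'k) rmod) P0 d e. min_proj_pres n k M P1 P0 d e \<longrightarrow>
            partial_tilting n k (pres_cx P1 P0) (pres_d d)"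
    show "modlength n k M < n"
    proof (rule ccontr)
      assume "\<not> modlength n k M < n"
      then have "n \<le> B.ht i v" using ml by simp
      then obtain P1 P0 d e where "min_proj_pres n k M (P1 :: ('k fvec, 'k) rmod) P0 d e"
          "\<not> partial_tilting n k (pres_cx P1 P0) (pres_d d)"
        using Y.nontilt hk by blast
      then show False using all by blast
    qed
  next
    assume lt: "modlength n k M < n"
    show "\<forall>(P1 :: ('k fvec, 'k) rmod) P0 d e. min_proj_pres n k M P1 P0 d e \<longrightarrow>
            partial_tilting n k (pres_cx P1 P0) (pres_d d)"
      using Y.tilt[of _ _ _ _] lt ml hk by auto
  qed
qed


end
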